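(* Let $X$ be an infinite-dimensional complex Banach space and $\mathbb{X}$ a compact topological space with at most countably many connected components. Then for every $\mathcal{T}\in\mathcal{C}(\mathbb{X},L(X))$ the Weyl spectrum $\sigma_W(\mathcal{T})$ is a closed subset of $\mathbb{C}$, and the map $\mathcal{T}\mapsto\sigma_W(\mathcal{T})$ is upper semi-continuous: whenever $\mathcal{T}_n\to\mathcal{T}$ in $\mathcal{C}(\mathbb{X},L(X))$, one has $\limsup_{n\to\infty}\sigma_W(\mathcal{T}_n)\subset\sigma_W(\mathcal{T})$.
   Context: $L(X)$ is the algebra of bounded operators, $Fred(X)$ the Fredholm operators, $ind(T)=\dim N(T)-\operatorname{codim}R(T)$. $\mathcal{C}(\mathbb{X},L(X))$ is the Banach algebra of norm-continuous maps $\mathbb{X}\to L(X)$ with pointwise operations and norm $\|\mathcal{T}\|=\sup_x\|\mathcal{T}_x\|$, where $\mathcal{T}_x=\mathcal{T}(x)$; $\mathcal{I}$ is the constant family $x\mapsto I$. $\mathcal{T}$ is a Weyl family if $\mathcal{T}_x\in Fred(X)$ and $ind(\mathcal{T}_x)=0$ for all $x\in\mathbb{X}$. The Weyl spectrum is $\sigma_W(\mathcal{T})=\{\lambda\in\mathbb{C}:\mathcal{T}-\lambda\mathcal{I}\text{ is not a Weyl family}\}$. For sets $A_n\subset\mathbb{C}$, $\limsup A_n$ (Kuratowski upper limit) is the set of $\lambda$ such that every neighborhood of $\lambda$ meets infinitely many $A_n$. *)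

theory Defs
  imports "HOL-Analysis.Analysis"
begin

class complex_banach = banach +
  fixes cscale :: "complex \<Rightarrow> 'a \<Rightarrow> 'a"
  assumes cscale_of_real: "cscale (complex_of_real r) x = r *\<^sub>R x"
    and cscale_add_left: "cscale (a + b) x = cscale a x + cscale b x"
    and cscale_add_right: "cscale a (x + y) = cscale a x + cscale a y"
    and cscale_cscale: "cscale a (cscale b x) = cscale (a * b) x"
    and norm_cscale: "norm (cscale a x) = cmod a * norm x"

definition cspan :: "'a::complex_banach set \<Rightarrow> 'a set" where
  "cspan B = {x. \<exists>F c. finite F \<and> F \<subseteq> B \<and> x = (\<Sum>v\<in>F. cscale (c v) v)}"

definition cdim :: "'a::complex_banach set \<Rightarrow> nat" where
  "cdim S = (LEAST n. \<exists>B. finite B \<and> card B = n \<and> B \<subseteq> S \<and> S \<subseteq> cspan B)"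

text \<open>Codimension of a subspace R, i.e. dim (X / R).\<close>
definition ccodim :: "'a::complex_banach set \<Rightarrow> nat" where
  "ccodim R = (LEAST n. \<exists>B. finite B \<and> card B = n \<and> cspan (R \<union> B) = UNIV)"

definition infinite_dimensional :: "'a::complex_banach itself \<Rightarrow> bool" where
  "infinite_dimensional _ \<longleftrightarrow> \<not> (\<exists>B::'a set. finite B \<and> cspan B = UNIV)"

text \<open>Bounded operators L(X): bounded (real-)linear maps that are complex linear.\<close>
definition is_cbounded :: "('a::complex_banach \<Rightarrow>\<^sub>L 'a) \<Rightarrow> bool" where
  "is_cbounded T \<longleftrightarrow> (\<forall>c x. blinfun_apply T (cscale c x) = cscale c (blinfun_apply T x))"

definition kernel :: "('a::complex_banach \<Rightarrow> 'a) \<Rightarrow> 'a set" where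
  "kernel f = {x. f x = 0}"

definition fredholm :: "('a::complex_banach \<Rightarrow> 'a) \<Rightarrow> bool" where
  "fredholm f \<longleftrightarrow> (\<exists>B. finite B \<and> kernel f \<subseteq> cspan B)
                   \<and> (\<exists>B. finite B \<and> cspan (range f \<union> B) = UNIV)"

definition findex :: "('a::complex_banach \<Rightarrow> 'a) \<Rightarrow> int" where
  "findex f = int (cdim (kernel f)) - int (ccodim (range f))"

definition weyl_family :: "('x \<Rightarrow> ('a::complex_banach \<Rightarrow> 'a)) \<Rightarrow> bool" where
  "weyl_family T \<longleftrightarrow> (\<forall>x. fredholm (T x) \<and> findex (T x) = 0)"

definition weyl_spectrum :: "('x \<Rightarrow> ('a::complex_banach \<Rightarrow>\<^sub>L 'a)) \<Rightarrow> complex set" where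
  "weyl_spectrum T = {z. \<not> weyl_family (\<lambda>x v. blinfun_apply (T x) v - cscale z v)}"

definition kuratowski_limsup :: "(nat \<Rightarrow> 'b::topological_space set) \<Rightarrow> 'b set" where
  "kuratowski_limsup A = {z. \<forall>U. open U \<and> z \<in> U \<longrightarrow> infinite {n. A n \<inter> U \<noteq> {}}}"

end

theory Submission
  imports Defs
begin


lemma cscale_one[simp]: "cscale 1 x = x"
  using cscale_of_real[of 1 x] by simp

interpretation cv: vector_space "cscale :: complex \<Rightarrow> 'a::complex_banach \<Rightarrow> 'a"
  by unfold_locales (auto simp: cscale_add_left cscale_add_right cscale_cscale)

interpretation cvp: vector_space_pair "cscale :: complex \<Rightarrow> 'a::complex_banach \<Rightarrow> 'a"
   "cscale :: complex \<Rightarrow> 'a::complex_banach \<Rightarrow> 'a"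
  by unfold_locales

abbreviation clin :: "('a::complex_banach \<Rightarrow> 'a) \<Rightarrow> bool" where
  "clin f \<equiv> Vector_Spaces.linear cscale cscale f"

lemma cspan_eq: "cspan B = cv.span B"
  unfolding cspan_def cv.span_explicit by auto

lemma span_disj:
  fixes C D :: "'a::complex_banach set"
  assumes ind: "cv.independent (C \<union> D)" and disj: "C \<inter> D = {}"
    and xC: "x \<in> cv.span C" and xD: "x \<in> cv.span D"
  shows "x = 0"
proof -
  obtain t u where t: "finite t" "t \<subseteq> C" and x1: "x = (\<Sum>a\<in>t. cscale (u a) a)"
    using xC unfolding cv.span_explicit by auto
  obtain t' w where t': "finite t'" "t' \<subseteq> D" and x2: "x = (\<Sum>a\<in>t'. cscale (w a) a)"
    using xD unfolding cv.span_explicit by auto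
  define v where "v a = (if a \<in> t then u a else - w a)" for a
  have dj: "t \<inter> t' = {}" using t t' disj by auto
  have s1: "(\<Sum>a\<in>t. cscale (v a) a) = x" using x1 by (simp add: v_def)
  have s2: "(\<Sum>a\<in>t'. cscale (v a) a) = - x"
  proof -
    have "(\<Sum>a\<in>t'. cscale (v a) a) = (\<Sum>a\<in>t'. - cscale (w a) a)"
      using dj by (intro sum.cong) (auto simp: v_def)
    also have "\<dots> = - x" using x2 by (simp add: sum_negf)
    finally show ?thesis .
  qed
  have "(\<Sum>a\<in>t \<union> t'. cscale (v a) a) = 0"
    using sum.union_disjoint[OF t(1) t'(1) dj, of "\<lambda>a. cscale (v a) a"] s1 s2 by simp
  moreover have "t \<union> t' \<subseteq> C \<union> D" using t t' by auto
  ultimately have "\<forall>a\<in>t \<union> t'. v a = 0"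
    using ind t t' unfolding cv.independent_explicit_finite_subsets by blast
  then have "\<forall>a\<in>t. u a = 0" by (metis UnI1 v_def)
  then show ?thesis using x1 by simp
qed

lemma rank_nullity:
  fixes f :: "'a::complex_banach \<Rightarrow> 'a"
  assumes lf: "clin f" and W: "cv.subspace W" and W0: "finite W0" "W \<subseteq> cv.span W0"
  shows "cv.dim {x\<in>W. f x = 0} + cv.dim (f ` W) = cv.dim W"
proof -
  let ?K = "{x\<in>W. f x = 0}"
  obtain C where C: "C \<subseteq> ?K" "cv.independent C" "?K \<subseteq> cv.span C" "card C = cv.dim ?K"
    using cv.basis_exists by blast
  obtain B where B: "C \<subseteq> B" "B \<subseteq> W" "cv.independent B" "W \<subseteq> cv.span B"
    using cv.maximal_independent_subset_extend[of C W] C by blast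
  have fB: "finite B" using cv.independent_span_bound[OF W0(1) B(3)] B(2) W0(2) by auto
  have cB: "card B = cv.dim W" using cv.basis_card_eq_dim B by blast
  define D where "D = B - C"
  have spD: "cv.span D \<subseteq> W"
    using B(2) W by (intro cv.span_minimal) (auto simp: D_def)
  have inj: "inj_on f (cv.span D)"
  proof (rule inj_onI)
    fix x y assume xy: "x \<in> cv.span D" "y \<in> cv.span D" "f x = f y"
    have "x - y \<in> cv.span D" using xy cv.span_diff by blast
    moreover have "f (x - y) = 0" using xy cvp.linear_diff[OF lf] by simp
    ultimately have "x - y \<in> ?K" using spD by auto
    then have "x - y \<in> cv.span C" using C by auto
    moreover have "cv.independent (C \<union> D)" using B by (simp add: D_def Un_absorb1)
    ultimately have "x - y = 0"
      using span_disj[of C D "x - y"] \<open>x - y \<in> cv.span D\<close> by (auto simp: D_def)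
    then show "x = y" by simp
  qed
  have indD: "cv.independent D" using B(3) by (rule cv.independent_mono) (auto simp: D_def)
  have indfD: "cv.independent (f ` D)"
    using cvp.linear_independent_injective_image[OF lf indD inj] .
  have cfD: "card (f ` D) = card D"
    using inj cv.span_superset by (intro card_image) (auto intro: inj_on_subset)
  have "f ` W \<subseteq> cv.span (f ` D)"
  proof -
    have "f ` W \<subseteq> f ` cv.span B" using B by auto
    also have "\<dots> = cv.span (f ` B)" using cvp.linear_span_image[OF lf] by simp
    also have "\<dots> \<subseteq> cv.span (insert 0 (f ` D))"
      using C(1) by (intro cv.span_mono) (auto simp: D_def)
    finally show ?thesis by simp
  qed
  then have "card (f ` D) = cv.dim (f ` W)"
    using indfD spD cv.span_superset[of D] by (intro cv.basis_card_eq_dim) auto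
  moreover have "card B = card C + card D"
    using fB B(1) by (simp add: D_def card_Diff_subset finite_subset card_mono)
  ultimately show ?thesis using cB C(4) cfD by simp
qed

lemma span_Un_subspace:
  fixes R D :: "'a::complex_banach set"
  assumes "cv.subspace R"
  shows "cv.span (R \<union> D) = {r + s |r s. r \<in> R \<and> s \<in> cv.span D}"
  using assms by (simp add: cv.span_Un cv.span_eq_iff[THEN iffD2])

lemma ccodim_eq:
  fixes R D :: "'a::complex_banach set"
  assumes R: "cv.subspace R" and D: "finite D" "cv.independent D"
   and int: "\<And>x. x \<in> cv.span D \<Longrightarrow> x \<in> R \<Longrightarrow> x = 0"
   and sm: "\<And>z. \<exists>r\<in>R. \<exists>s\<in>cv.span D. z = r + s"
  shows "cspan (R \<union> D) = UNIV" "ccodim R = card D"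
proof -
  show sp: "cspan (R \<union> D) = UNIV"
  proof -
    have "x \<in> {r + s |r s. r \<in> R \<and> s \<in> cv.span D}" for x
    proof -
      obtain r s where "r \<in> R" "s \<in> cv.span D" "x = r + s" using sm[of x] by blast
      then show ?thesis by blast
    qed
    then show ?thesis unfolding cspan_eq span_Un_subspace[OF R] by blast
  qed
  have le: "card D \<le> card B" if B: "finite B" "cspan (R \<union> B) = UNIV" for B
  proof -
    have "\<forall>d. \<exists>s. s \<in> cv.span B \<and> d - s \<in> R"
    proof
      fix d :: 'a
      have "d \<in> cv.span (R \<union> B)" using B(2) by (simp add: cspan_eq)
      then obtain r s where "r \<in> R" "s \<in> cv.span B" "d = r + s"
        unfolding span_Un_subspace[OF R] by auto
      then show "\<exists>s. s \<in> cv.span B \<and> d - s \<in> R" by (intro exI[of _ s]) auto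
    qed
    then obtain h where h: "\<And>d. h d \<in> cv.span B" "\<And>d. d - h d \<in> R" by metis
    define L where "L = cvp.construct D h"
    have lL: "clin L" unfolding L_def by (rule cvp.linear_construct[OF D(2)])
    have LD: "\<And>d. d \<in> D \<Longrightarrow> L d = h d" unfolding L_def by (rule cvp.construct_basis[OF D(2)])
    let ?Q = "{x. x - L x \<in> R}"
    have Q: "cv.subspace ?Q"
      unfolding cv.subspace_def
    proof (intro conjI allI ballI)
      show "0 \<in> ?Q" using cvp.linear_0[OF lL] cv.subspace_0[OF R] by simp
    next
      fix x y assume "x \<in> ?Q" "y \<in> ?Q"
      then have "(x - L x) + (y - L y) \<in> R" using cv.subspace_add[OF R] by simp
      moreover have "(x + y) - L (x + y) = (x - L x) + (y - L y)"
        using cvp.linear_add[OF lL, of x y] by (simp add: algebra_simps)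
      ultimately show "x + y \<in> ?Q" by (metis (mono_tags) mem_Collect_eq)
    next
      fix c x assume "x \<in> ?Q"
      then have "cscale c (x - L x) \<in> R" using cv.subspace_scale[OF R] by simp
      moreover have "cscale c x - L (cscale c x) = cscale c (x - L x)"
        using cvp.linear_scale[OF lL] cv.scale_right_diff_distrib by metis
      ultimately show "cscale c x \<in> ?Q" by (metis (mono_tags) mem_Collect_eq)
    qed
    have DQ: "cv.span D \<subseteq> ?Q"
      using h(2) LD by (intro cv.span_minimal[OF _ Q]) auto
    have inj: "inj_on L (cv.span D)"
    proof (rule inj_onI)
      fix x y assume xy: "x \<in> cv.span D" "y \<in> cv.span D" "L x = L y"
      have z: "x - y \<in> cv.span D" using xy cv.span_diff by blast
      have "L (x - y) = 0" using xy cvp.linear_diff[OF lL] by simp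
      then have "x - y \<in> R" using DQ z by force
      then show "x = y" using int[OF z] by simp
    qed
    have ind: "cv.independent (L ` D)"
      by (rule cvp.linear_independent_injective_image[OF lL D(2) inj])
    have "L ` D \<subseteq> cv.span B" using LD h(1) by auto
    then have "card (L ` D) \<le> card B" using cv.independent_span_bound[OF B(1) ind] by auto
    moreover have "card (L ` D) = card D"
      using inj cv.span_superset[of D] by (intro card_image) (auto intro: inj_on_subset)
    ultimately show ?thesis by simp
  qed
  show "ccodim R = card D"
    unfolding ccodim_def
  proof (rule Least_equality)
    show "\<exists>B. finite B \<and> card B = card D \<and> cspan (R \<union> B) = UNIV"
      using D sp by blast
  next
    fix n assume "\<exists>B. finite B \<and> card B = n \<and> cspan (R \<union> B) = UNIV"
    then show "card D \<le> n" using le by blast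
  qed
qed

lemma findim_subset:
  fixes W :: "'a::complex_banach set"
  assumes "finite W0" "W \<subseteq> cv.span W0" "B \<subseteq> W" "cv.independent B"
  shows "finite B"
  using cv.independent_span_bound[OF assms(1,4)] assms(2,3) by auto

lemma codim_complement:
  fixes R V :: "'a::complex_banach set"
  assumes R: "cv.subspace R" and V: "cv.subspace V" and V0: "finite V0" "V \<subseteq> cv.span V0"
    and sm: "\<And>z. \<exists>r\<in>R. \<exists>v\<in>V. z = r + v"
  shows "\<exists>B. finite B \<and> cspan (R \<union> B) = UNIV"
    "ccodim R + cv.dim (R \<inter> V) = cv.dim V"
proof -
  obtain C where C: "C \<subseteq> R \<inter> V" "cv.independent C" "R \<inter> V \<subseteq> cv.span C" "card C = cv.dim (R \<inter> V)"
    using cv.basis_exists by blast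
  obtain B where B: "C \<subseteq> B" "B \<subseteq> V" "cv.independent B" "V \<subseteq> cv.span B"
    using cv.maximal_independent_subset_extend[of C V] C by blast
  have fB: "finite B" using findim_subset[OF V0 B(2,3)] .
  have cB: "card B = cv.dim V" using cv.basis_card_eq_dim B by blast
  define D where "D = B - C"
  have indD: "cv.independent D" using B(3) by (rule cv.independent_mono) (auto simp: D_def)
  have spBV: "cv.span B \<subseteq> V" using B(2) V by (intro cv.span_minimal) auto
  have int: "x = 0" if x: "x \<in> cv.span D" "x \<in> R" for x
  proof -
    have "x \<in> V" using x(1) spBV cv.span_mono[of D B] by (auto simp: D_def)
    then have "x \<in> cv.span C" using C x by auto
    moreover have "cv.independent (C \<union> D)" using B by (simp add: D_def Un_absorb1)
    ultimately show "x = 0" using span_disj[of C D x] x by (auto simp: D_def)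
  qed
  have sm2: "\<exists>r\<in>R. \<exists>s\<in>cv.span D. z = r + s" for z
  proof -
    obtain r v where rv: "r \<in> R" "v \<in> V" "z = r + v" using sm by blast
    have "v \<in> cv.span (C \<union> D)" using B rv by (auto simp: D_def Un_absorb1)
    then obtain a b where ab: "a \<in> cv.span C" "b \<in> cv.span D" "v = a + b"
      unfolding cv.span_Un by auto
    have "a \<in> R" using ab C(1) cv.span_minimal[OF _ R, of C] by auto
    then show ?thesis using rv ab cv.subspace_add[OF R] by (intro bexI[of _ "r + a"] bexI[of _ b]) auto
  qed
  have fD: "finite D" using fB by (simp add: D_def)
  note cc = ccodim_eq[OF R fD indD int sm2]
  show "\<exists>B. finite B \<and> cspan (R \<union> B) = UNIV" using cc(1) fD by blast
  have "card B = card C + card D"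
    using fB B(1) by (simp add: D_def card_Diff_subset finite_subset card_mono)
  then show "ccodim R + cv.dim (R \<inter> V) = cv.dim V" using cc(2) cB C(4) by simp
qed

lemma cdim_eq:
  fixes S :: "'a::complex_banach set"
  assumes "finite S0" "S \<subseteq> cv.span S0"
  shows "cdim S = cv.dim S"
  unfolding cdim_def
proof (rule Least_equality)
  obtain B where B: "B \<subseteq> S" "cv.independent B" "S \<subseteq> cv.span B" "card B = cv.dim S"
    using cv.basis_exists by blast
  show "\<exists>B. finite B \<and> card B = cv.dim S \<and> B \<subseteq> S \<and> S \<subseteq> cspan B"
    using B findim_subset[OF assms B(1,2)] by (auto simp: cspan_eq)
next
  fix n assume "\<exists>B. finite B \<and> card B = n \<and> B \<subseteq> S \<and> S \<subseteq> cspan B"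
  then show "cv.dim S \<le> n" using cv.dim_le_card by (auto simp: cspan_eq)
qed


lemma dim_zero_space: "cv.dim ({0} :: 'a::complex_banach set) = 0"
  by (metis cv.dim_span cv.dim_eq_card_independent cv.independent_empty cv.span_empty card.empty)

lemma index_zero_bij_minus_fin:
  fixes G K :: "'a::complex_banach \<Rightarrow> 'a"
  assumes lG: "clin G" and bG: "bij G" and lK: "clin K" and F: "finite F"
    and KF: "\<And>x. K x \<in> cv.span F"
  shows "fredholm (\<lambda>x. G x - K x) \<and> findex (\<lambda>x. G x - K x) = 0"
proof -
  define B where "B = (\<lambda>x. G x - K x)"
  have lB: "clin B" unfolding B_def using cvp.linear_compose_sub[OF lG lK] by (simp add: fun_diff_def)
  define V where "V = cv.span F"
  define W where "W = G -` V"
  have Vs: "cv.subspace V" unfolding V_def by simp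
  have Ws: "cv.subspace W" unfolding W_def by (rule cvp.linear_subspace_vimage[OF lG Vs])
  obtain g where lg: "clin g" and Gg: "G \<circ> g = id"
    using cvp.linear_surjective_right_inverse[OF lG] bG bij_is_surj by blast
  have gG: "g (G x) = x" for x
  proof -
    have "G (g (G x)) = G x" using Gg by (simp add: pointfree_idE)
    then show ?thesis using bG by (simp add: bij_def inj_eq)
  qed
  have Gg': "G (g y) = y" for y using Gg by (simp add: pointfree_idE)
  have fgF: "finite (g ` F)" using F by simp
  have W0: "W \<subseteq> cv.span (g ` F)"
  proof
    fix x assume "x \<in> W"
    then have "G x \<in> V" by (simp add: W_def)
    then have "g (G x) \<in> g ` cv.span F" by (simp add: V_def)
    then show "x \<in> cv.span (g ` F)" using cvp.linear_span_image[OF lg] gG by simp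
  qed
  have kerW: "kernel B \<subseteq> W"
  proof
    fix x assume "x \<in> kernel B"
    then have "G x = K x" by (simp add: kernel_def B_def)
    then show "x \<in> W" using KF by (simp add: W_def V_def)
  qed
  have kerEq: "{x\<in>W. B x = 0} = kernel B" using kerW by (auto simp: kernel_def)
  have rn1: "cv.dim (kernel B) + cv.dim (B ` W) = cv.dim W"
    using rank_nullity[OF lB Ws fgF W0] kerEq by simp
  have "{x\<in>W. G x = 0} = {0}"
  proof -
    have "G x = 0 \<Longrightarrow> x = 0" for x
      using cvp.linear_0[OF lG] bG by (metis bij_def injD)
    then show ?thesis using cvp.linear_0[OF lG] cv.subspace_0[OF Ws] by auto
  qed
  then have rn2: "cv.dim (G ` W) = cv.dim W"
    using rank_nullity[OF lG Ws fgF W0] dim_zero_space by (metis add_0)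
  have GW: "G ` W = V"
  proof
    show "G ` W \<subseteq> V" by (auto simp: W_def)
    show "V \<subseteq> G ` W"
    proof
      fix v assume "v \<in> V"
      then have "g v \<in> W" using Gg' by (simp add: W_def)
      then show "v \<in> G ` W" using Gg'[of v] by (metis image_eqI)
    qed
  qed
  have Rs: "cv.subspace (range B)" by (rule cvp.linear_subspace_image[OF lB cv.subspace_UNIV])
  have RV: "range B \<inter> V = B ` W"
  proof
    show "range B \<inter> V \<subseteq> B ` W"
    proof
      fix y assume "y \<in> range B \<inter> V"
      then obtain x where x: "y = B x" "B x \<in> V" by auto
      have "G x = B x + K x" by (simp add: B_def)
      then have "G x \<in> V" using x KF[of x] cv.span_add[of "B x" F "K x"] by (simp add: V_def)
      then show "y \<in> B ` W" using x by (auto simp: W_def)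
    qed
    show "B ` W \<subseteq> range B \<inter> V"
    proof
      fix y assume "y \<in> B ` W"
      then obtain x where x: "y = B x" "G x \<in> V" by (auto simp: W_def)
      then have "G x - K x \<in> V" using KF[of x] cv.span_diff[of "G x" F "K x"] by (simp add: V_def)
      then show "y \<in> range B \<inter> V" using x by (simp add: B_def)
    qed
  qed
  have sm: "\<exists>r\<in>range B. \<exists>v\<in>V. z = r + v" for z
  proof -
    obtain x where "z = G x" using bG by (metis bij_pointE)
    then have "z = B x + K x" by (simp add: B_def)
    then show ?thesis using KF by (auto simp: V_def)
  qed
  have VF: "V \<subseteq> cv.span F" by (simp add: V_def)
  note co = codim_complement[OF Rs Vs F VF sm]
  have cd: "cdim (kernel B) = cv.dim (kernel B)"
    using cdim_eq[OF fgF] kerW W0 by blast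
  have fr: "fredholm B"
    unfolding fredholm_def cspan_eq[symmetric] using co(1) kerW W0 fgF by (metis cspan_eq order_trans)
  have "findex B = 0"
    unfolding findex_def using cd co(2) RV rn1 rn2 GW by simp
  then show ?thesis using fr by (simp add: B_def)
qed



definition goodg :: "('a::real_normed_vector \<times> real) set \<Rightarrow> bool" where
 "goodg G \<longleftrightarrow> (0,0) \<in> G \<and> (\<forall>x a y b. (x,a)\<in>G \<longrightarrow> (y,b)\<in>G \<longrightarrow> (x+y,a+b)\<in>G)
   \<and> (\<forall>x a r. (x,a)\<in>G \<longrightarrow> (r *\<^sub>R x, r*a)\<in>G) \<and> (\<forall>x a b. (x,a)\<in>G \<longrightarrow> (x,b)\<in>G \<longrightarrow> a = b)
   \<and> (\<forall>x a. (x,a)\<in>G \<longrightarrow> a \<le> norm x)"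

lemma goodgD:
  assumes "goodg G"
  shows goodg_0: "(0,0) \<in> G"
    and goodg_add: "\<And>x a y b. (x,a)\<in>G \<Longrightarrow> (y,b)\<in>G \<Longrightarrow> (x+y,a+b)\<in>G"
    and goodg_sc: "\<And>x a r. (x,a)\<in>G \<Longrightarrow> (r *\<^sub>R x, r*a)\<in>G"
    and goodg_fn: "\<And>x a b. (x,a)\<in>G \<Longrightarrow> (x,b)\<in>G \<Longrightarrow> a = b"
    and goodg_dm: "\<And>x a. (x,a)\<in>G \<Longrightarrow> a \<le> norm x"
  using assms unfolding goodg_def by simp_all

lemma goodg_extend:
  fixes G :: "('a::real_normed_vector \<times> real) set"
  assumes g: "goodg G" and x0: "x0 \<notin> fst ` G"
  shows "\<exists>G'. goodg G' \<and> G \<subseteq> G' \<and> G' \<noteq> G"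
proof -
  have z: "(0,0) \<in> G" and ad: "\<And>x a y b. (x,a)\<in>G \<Longrightarrow> (y,b)\<in>G \<Longrightarrow> (x+y,a+b)\<in>G"
    and sc: "\<And>x a r. (x,a)\<in>G \<Longrightarrow> (r *\<^sub>R x, r*a)\<in>G"
    and fn: "\<And>x a b. (x,a)\<in>G \<Longrightarrow> (x,b)\<in>G \<Longrightarrow> a = b"
    and dm: "\<And>x a. (x,a)\<in>G \<Longrightarrow> a \<le> norm x"
    using g unfolding goodg_def by blast+
  have key: "a - norm (m - x0) \<le> norm (m' + x0) - a'" if "(m,a)\<in>G" "(m',a')\<in>G" for m a m' a'
  proof -
    have "a + a' \<le> norm (m + m')" using dm[OF ad[OF that]] .
    also have "\<dots> = norm ((m - x0) + (m' + x0))" by simp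
    also have "\<dots> \<le> norm (m - x0) + norm (m' + x0)" by (rule norm_triangle_ineq)
    finally show ?thesis by simp
  qed
  define S where "S = {a - norm (m - x0) | m a. (m,a)\<in>G}"
  define c where "c = Sup S"
  have Sne: "S \<noteq> {}" using z by (auto simp: S_def)
  have Sbd: "bdd_above S"
    unfolding bdd_above_def S_def using key[OF _ z] by auto
  have c1: "a - norm (m - x0) \<le> c" if "(m,a)\<in>G" for m a
    unfolding c_def using that Sbd by (intro cSup_upper) (auto simp: S_def)
  have c2: "c \<le> norm (m' + x0) - a'" if "(m',a')\<in>G" for m' a'
    unfolding c_def using Sne key[OF _ that] by (intro cSup_least) (auto simp: S_def)
  define G' where "G' = {(m + t *\<^sub>R x0, a + t * c) | m a t. (m,a)\<in>G}"
  have "goodg G'"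
    unfolding goodg_def
  proof (intro conjI allI impI)
    show "(0,0) \<in> G'" unfolding G'_def using z by force
  next
    fix x a y b assume "(x,a)\<in>G'" "(y,b)\<in>G'"
    then obtain m1 a1 t1 m2 a2 t2 where h: "(m1,a1)\<in>G" "x = m1 + t1 *\<^sub>R x0" "a = a1 + t1 * c"
      "(m2,a2)\<in>G" "y = m2 + t2 *\<^sub>R x0" "b = a2 + t2 * c" unfolding G'_def by blast
    have "x + y = (m1 + m2) + (t1 + t2) *\<^sub>R x0" "a + b = (a1 + a2) + (t1 + t2) * c"
      using h by (auto simp: algebra_simps)
    then show "(x+y,a+b)\<in>G'" unfolding G'_def using ad[OF h(1) h(4)] by blast
  next
    fix x a r assume "(x,a)\<in>G'"
    then obtain m1 a1 t1 where h: "(m1,a1)\<in>G" "x = m1 + t1 *\<^sub>R x0" "a = a1 + t1 * c"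
      unfolding G'_def by blast
    have "r *\<^sub>R x = r *\<^sub>R m1 + (r * t1) *\<^sub>R x0" "r * a = r * a1 + (r * t1) * c"
      using h by (auto simp: algebra_simps)
    then show "(r *\<^sub>R x, r*a)\<in>G'" unfolding G'_def using sc[OF h(1)] by blast
  next
    fix x a b assume "(x,a)\<in>G'" "(x,b)\<in>G'"
    then obtain m1 a1 t1 m2 a2 t2 where h: "(m1,a1)\<in>G" "x = m1 + t1 *\<^sub>R x0" "a = a1 + t1 * c"
      "(m2,a2)\<in>G" "x = m2 + t2 *\<^sub>R x0" "b = a2 + t2 * c" unfolding G'_def by blast
    have t: "t1 = t2"
    proof (rule ccontr)
      assume ne: "t1 \<noteq> t2"
      have "(m2 + (-1) *\<^sub>R m1, a2 + (-1) * a1) \<in> G" using ad[OF h(4) sc[OF h(1)]] .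
      then have "((1 / (t1 - t2)) *\<^sub>R (m2 + (-1) *\<^sub>R m1), (1 / (t1 - t2)) * (a2 + (-1) * a1)) \<in> G"
        by (rule sc)
      moreover have "(1 / (t1 - t2)) *\<^sub>R (m2 + (-1) *\<^sub>R m1) = x0"
      proof -
        have "m2 - m1 = (t1 - t2) *\<^sub>R x0" using h(2,5) by (simp add: algebra_simps)
        then show ?thesis using ne by simp
      qed
      ultimately have "x0 \<in> fst ` G" by (metis fst_conv image_eqI)
      then show False using x0 by simp
    qed
    then have "m1 = m2" using h by simp
    then have "a1 = a2" using fn h by blast
    then show "a = b" using h t by simp
  next
    fix x a assume "(x,a)\<in>G'"
    then obtain m a1 t where h: "(m,a1)\<in>G" "x = m + t *\<^sub>R x0" "a = a1 + t * c"
      unfolding G'_def by blast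
    show "a \<le> norm x"
    proof (cases "t = 0")
      case True then show ?thesis using h dm by simp
    next
      case False
      show ?thesis
      proof (cases "t > 0")
        case True
        have "((1/t) *\<^sub>R m, (1/t) * a1) \<in> G" using sc[OF h(1)] .
        then have "c \<le> norm ((1/t) *\<^sub>R m + x0) - (1/t) * a1" by (rule c2)
        then have "t * c \<le> t * (norm ((1/t) *\<^sub>R m + x0) - (1/t) * a1)"
          using True by (intro mult_left_mono) auto
        also have "\<dots> = t * norm ((1/t) *\<^sub>R m + x0) - a1"
          using True by (simp add: right_diff_distrib)
        also have "t * norm ((1/t) *\<^sub>R m + x0) = norm (t *\<^sub>R ((1/t) *\<^sub>R m + x0))"
          using True by simp
        also have "t *\<^sub>R ((1/t) *\<^sub>R m + x0) = x" using True h by (simp add: scaleR_add_right)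
        finally show ?thesis using h by simp
      next
        case False
        then have tn: "t < 0" using \<open>t \<noteq> 0\<close> by simp
        define s where "s = - t"
        have s: "s > 0" using tn by (simp add: s_def)
        have "((1/s) *\<^sub>R m, (1/s) * a1) \<in> G" using sc[OF h(1)] .
        then have "(1/s) * a1 - norm ((1/s) *\<^sub>R m - x0) \<le> c" by (rule c1)
        then have "s * ((1/s) * a1 - norm ((1/s) *\<^sub>R m - x0)) \<le> s * c"
          using s by (intro mult_left_mono) auto
        then have "a1 - s * norm ((1/s) *\<^sub>R m - x0) \<le> s * c"
          using s by (simp add: right_diff_distrib)
        also have "s * norm ((1/s) *\<^sub>R m - x0) = norm (s *\<^sub>R ((1/s) *\<^sub>R m - x0))"
          using s by simp
        also have "s *\<^sub>R ((1/s) *\<^sub>R m - x0) = x" using s h by (simp add: scaleR_diff_right s_def)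
        finally show ?thesis using h by (simp add: s_def)
      qed
    qed
  qed
  moreover have "G \<subseteq> G'"
  proof
    fix p assume "p \<in> G"
    then obtain m a where "p = (m,a)" "(m,a)\<in>G" by (cases p) auto
    then have "p = (m + 0 *\<^sub>R x0, a + 0 * c)" "(m,a)\<in>G" by auto
    then show "p \<in> G'" unfolding G'_def by blast
  qed
  moreover have "(x0, c) \<in> G'"
  proof -
    have "(x0, c) = (0 + 1 *\<^sub>R x0, 0 + 1 * c)" by simp
    then show ?thesis unfolding G'_def using z by blast
  qed
  then have "G' \<noteq> G" using x0 by force
  ultimately show ?thesis by blast
qed


lemma hb_graph:
  fixes G0 :: "('a::real_normed_vector \<times> real) set"
  assumes g0: "goodg G0"
  shows "\<exists>u. bounded_linear u \<and> (\<forall>x a. (x,a)\<in>G0 \<longrightarrow> u x = a)"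
proof -
  let ?A = "{G. goodg G \<and> G0 \<subseteq> G}"
  have "\<exists>M\<in>?A. \<forall>X\<in>?A. M \<subseteq> X \<longrightarrow> X = M"
  proof (rule subset_Zorn_nonempty)
    have "G0 \<in> ?A" using g0 by simp
    then show "?A \<noteq> {}" by auto
  next
    fix C assume Cne: "C \<noteq> {}" and ch: "subset.chain ?A C"
    have CA: "C \<subseteq> ?A" using ch unfolding subset_chain_def by simp
    have cmp: "\<And>X Y. X\<in>C \<Longrightarrow> Y\<in>C \<Longrightarrow> X \<subseteq> Y \<or> Y \<subseteq> X"
      using ch unfolding subset_chain_def by simp
    have two: "\<exists>Z\<in>C. p \<in> Z \<and> q \<in> Z" if pq: "p \<in> \<Union>C" "q \<in> \<Union>C" for p q
    proof -
      obtain X Y where "X\<in>C" "Y\<in>C" "p\<in>X" "q\<in>Y" using pq by blast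
      then show ?thesis using cmp[of X Y] by blast
    qed
    have gC: "\<And>Z. Z \<in> C \<Longrightarrow> goodg Z" using CA by auto
    have "goodg (\<Union>C)"
      unfolding goodg_def
    proof (intro conjI allI impI)
      obtain Z where "Z \<in> C" using Cne by blast
      then show "(0,0) \<in> \<Union>C" using goodg_0[OF gC[of Z]] by blast
    next
      fix x a y b assume "(x,a) \<in> \<Union>C" "(y,b) \<in> \<Union>C"
      then obtain Z where "Z\<in>C" "(x,a)\<in>Z" "(y,b)\<in>Z" using two by blast
      then show "(x+y,a+b) \<in> \<Union>C" using goodg_add[OF gC[of Z]] by blast
    next
      fix x a r assume "(x,a) \<in> \<Union>C"
      then obtain Z where "Z\<in>C" "(x,a)\<in>Z" by blast
      then show "(r *\<^sub>R x, r*a) \<in> \<Union>C" using goodg_sc[OF gC[of Z]] by blast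
    next
      fix x a b assume "(x,a) \<in> \<Union>C" "(x,b) \<in> \<Union>C"
      then obtain Z where "Z\<in>C" "(x,a)\<in>Z" "(x,b)\<in>Z" using two by blast
      then show "a = b" using goodg_fn[OF gC[of Z]] by blast
    next
      fix x a assume "(x,a) \<in> \<Union>C"
      then obtain Z where "Z\<in>C" "(x,a)\<in>Z" by blast
      then show "a \<le> norm x" using goodg_dm[OF gC[of Z]] by blast
    qed
    moreover have "G0 \<subseteq> \<Union>C"
    proof -
      obtain Z where "Z \<in> C" using Cne by blast
      then show ?thesis using CA by auto
    qed
    ultimately show "\<Union>C \<in> ?A" by simp
  qed
  then obtain M where MA: "M \<in> ?A" and max0: "\<forall>X\<in>?A. M \<subseteq> X \<longrightarrow> X = M"
    by (rule bexE)
  have M: "goodg M" "G0 \<subseteq> M" using MA by simp_all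
  have max: "\<And>X. goodg X \<Longrightarrow> G0 \<subseteq> X \<Longrightarrow> M \<subseteq> X \<Longrightarrow> X = M"
    using max0 by simp
  have z: "(0,0) \<in> M" and ad: "\<And>x a y b. (x,a)\<in>M \<Longrightarrow> (y,b)\<in>M \<Longrightarrow> (x+y,a+b)\<in>M"
    and sc: "\<And>x a r. (x,a)\<in>M \<Longrightarrow> (r *\<^sub>R x, r*a)\<in>M"
    and fn: "\<And>x a b. (x,a)\<in>M \<Longrightarrow> (x,b)\<in>M \<Longrightarrow> a = b"
    and dm: "\<And>x a. (x,a)\<in>M \<Longrightarrow> a \<le> norm x"
    using goodgD[OF M(1)] by blast+
  have tot: "x \<in> fst ` M" for x
  proof (rule ccontr)
    assume "x \<notin> fst ` M"
    then have "\<exists>G'. goodg G' \<and> M \<subseteq> G' \<and> G' \<noteq> M" by (rule goodg_extend[OF M(1)])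
    then obtain G' where "goodg G'" "M \<subseteq> G'" "G' \<noteq> M" by (elim exE conjE)
    then show False using max[of G'] M(2) by simp
  qed
  define u where "u x = (THE a. (x,a) \<in> M)" for x
  have uM: "(x, u x) \<in> M" for x
  proof -
    obtain a where a: "(x,a) \<in> M" using tot[of x] by force
    then have "(THE a. (x,a) \<in> M) = a" using fn by blast
    then show ?thesis using a by (simp add: u_def)
  qed
  have uadd: "u (x + y) = u x + u y" for x y using fn[OF uM ad[OF uM uM]] .
  have usc: "u (r *\<^sub>R x) = r * u x" for r x using fn[OF uM sc[OF uM]] .
  have ule: "\<bar>u x\<bar> \<le> norm x" for x
  proof -
    have "u x \<le> norm x" using dm[OF uM] .
    moreover have "- u x \<le> norm x" using dm[OF uM, of "-x"] usc[of "-1" x] by simp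
    ultimately show ?thesis by simp
  qed
  have "bounded_linear u"
    by (rule bounded_linear_intro[where K=1]) (use uadd usc ule in auto)
  moreover have "u x = a" if "(x,a)\<in>G0" for x a using fn[OF uM, of x a] that M(2) by blast
  ultimately show ?thesis by blast
qed

lemma hb_sep:
  fixes Y :: "'a::real_normed_vector set"
  assumes Y: "subspace Y" "closed Y" and x0: "x0 \<notin> Y"
  shows "\<exists>u::'a \<Rightarrow> real. bounded_linear u \<and> (\<forall>y\<in>Y. u y = 0) \<and> u x0 \<noteq> 0"
proof -
  have Yne: "Y \<noteq> {}" using Y(1) subspace_0 by blast
  define d where "d = infdist x0 Y"
  have d: "d > 0" unfolding d_def by (rule infdist_pos_not_in_closed[OF Y(2) Yne x0])
  have notin: "t1 = t2" if "y1 \<in> Y" "y2 \<in> Y" "y1 + t1 *\<^sub>R x0 = y2 + t2 *\<^sub>R x0" for y1 y2 t1 t2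
  proof (rule ccontr)
    assume ne: "t1 \<noteq> t2"
    have "(t1 - t2) *\<^sub>R x0 = y2 - y1" using that(3) by (simp add: algebra_simps)
    moreover have "x0 = (1/(t1 - t2)) *\<^sub>R ((t1 - t2) *\<^sub>R x0)" using ne by simp
    ultimately have "x0 = (1/(t1 - t2)) *\<^sub>R (y2 - y1)" by simp
    moreover have "(1/(t1 - t2)) *\<^sub>R (y2 - y1) \<in> Y"
      using that Y(1) by (simp add: subspace_scale subspace_diff)
    ultimately show False using x0 by simp
  qed
  define G0 where "G0 = {(y + t *\<^sub>R x0, t * d) | y t. y \<in> Y}"
  have "goodg G0"
    unfolding goodg_def
  proof (intro conjI allI impI)
    have "(0::'a, 0::real) = (0 + 0 *\<^sub>R x0, 0 * d)" by simp
    then show "(0,0) \<in> G0" unfolding G0_def using subspace_0[OF Y(1)] by blast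
  next
    fix x a y b assume "(x,a) \<in> G0" "(y,b) \<in> G0"
    then obtain y1 t1 y2 t2 where h: "y1 \<in> Y" "x = y1 + t1 *\<^sub>R x0" "a = t1 * d"
      "y2 \<in> Y" "y = y2 + t2 *\<^sub>R x0" "b = t2 * d" unfolding G0_def by blast
    have "(x + y, a + b) = ((y1 + y2) + (t1 + t2) *\<^sub>R x0, (t1 + t2) * d)"
      using h by (simp add: algebra_simps)
    moreover have "y1 + y2 \<in> Y" using h Y(1) by (simp add: subspace_add)
    ultimately show "(x+y,a+b) \<in> G0" unfolding G0_def by blast
  next
    fix x a r assume "(x,a) \<in> G0"
    then obtain y1 t1 where h: "y1 \<in> Y" "x = y1 + t1 *\<^sub>R x0" "a = t1 * d"
      unfolding G0_def by blast
    have "(r *\<^sub>R x, r * a) = (r *\<^sub>R y1 + (r * t1) *\<^sub>R x0, (r * t1) * d)"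
      using h by (simp add: algebra_simps)
    moreover have "r *\<^sub>R y1 \<in> Y" using h Y(1) by (simp add: subspace_scale)
    ultimately show "(r *\<^sub>R x, r*a) \<in> G0" unfolding G0_def by blast
  next
    fix x a b assume "(x,a) \<in> G0" "(x,b) \<in> G0"
    then obtain y1 t1 y2 t2 where h: "y1 \<in> Y" "x = y1 + t1 *\<^sub>R x0" "a = t1 * d"
      "y2 \<in> Y" "x = y2 + t2 *\<^sub>R x0" "b = t2 * d" unfolding G0_def by blast
    then have "t1 = t2" using notin by metis
    then show "a = b" using h by simp
  next
    fix x a assume "(x,a) \<in> G0"
    then obtain y1 t where h: "y1 \<in> Y" "x = y1 + t *\<^sub>R x0" "a = t * d"
      unfolding G0_def by blast
    show "a \<le> norm x"
    proof (cases "t > 0")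
      case False
      then have "a \<le> 0" using h d by (simp add: mult_nonpos_nonneg)
      then show ?thesis by (rule order_trans) simp
    next
      case True
      have "- ((1/t) *\<^sub>R y1) \<in> Y" using h Y(1) by (simp add: subspace_scale subspace_neg)
      then have "d \<le> dist x0 (- ((1/t) *\<^sub>R y1))" unfolding d_def by (rule infdist_le)
      also have "\<dots> = norm ((1/t) *\<^sub>R y1 + x0)" by (simp add: dist_norm add.commute)
      finally have "t * d \<le> t * norm ((1/t) *\<^sub>R y1 + x0)" using True by simp
      also have "\<dots> = norm (t *\<^sub>R ((1/t) *\<^sub>R y1 + x0))" using True by simp
      also have "t *\<^sub>R ((1/t) *\<^sub>R y1 + x0) = x" using True h by (simp add: scaleR_add_right)
      finally show ?thesis using h by simp
    qed
  qed
  then obtain u where u: "bounded_linear u" "\<And>x a. (x,a)\<in>G0 \<Longrightarrow> u x = a"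
    using hb_graph by blast
  have "u y = 0" if "y \<in> Y" for y
  proof -
    have "(y, 0) = (y + 0 *\<^sub>R x0, 0 * d)" by simp
    then have "(y, 0) \<in> G0" unfolding G0_def using that by blast
    then show ?thesis using u(2) by blast
  qed
  moreover have "u x0 = d"
  proof -
    have "(x0, d) = (0 + 1 *\<^sub>R x0, 1 * d)" by simp
    then have "(x0, d) \<in> G0" unfolding G0_def using subspace_0[OF Y(1)] by blast
    then show ?thesis using u(2) by blast
  qed
  ultimately show ?thesis using u(1) d by (intro exI[of _ u]) auto
qed



lemma cscale_real: "r *\<^sub>R x = cscale (complex_of_real r) x"
  by (simp add: cscale_of_real)

lemma cscale_zero_left[simp]: "cscale 0 x = 0"
  using cscale_of_real[of 0 x] by simp

lemma cscale_zero_right[simp]: "cscale c (0::'a::complex_banach) = 0"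
  using norm_cscale[of c "0::'a"] by simp

lemma cscale_minus_left: "cscale (- c) x = - cscale c x"
  by (metis add_eq_0_iff cscale_add_left cscale_zero_left neg_equal_iff_equal)

lemma cscale_diff_right: "cscale c (x - y) = cscale c x - cscale c (y::'a::complex_banach)"
  by (metis add_diff_cancel cscale_add_right diff_add_cancel eq_diff_eq)

lemma cscale_diff_left: "cscale (a - b) (x::'a::complex_banach) = cscale a x - cscale b x"
  by (metis add_diff_cancel cscale_add_left diff_add_cancel eq_diff_eq)

lemma cscale_scaleR_comm: "cscale c (r *\<^sub>R x) = r *\<^sub>R cscale c (x::'a::complex_banach)"
  by (simp add: cscale_real cscale_cscale mult.commute)

lemma bl_cscale_right: "bounded_linear (cscale c :: 'a::complex_banach \<Rightarrow> 'a)"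
  by (rule bounded_linear_intro[where K="cmod c"])
     (auto simp: cscale_add_right cscale_scaleR_comm norm_cscale mult.commute)

lemma bl_cscale_left: "bounded_linear (\<lambda>c::complex. cscale c (a::'a::complex_banach))"
  by (rule bounded_linear_intro[where K="norm a"])
     (auto simp: cscale_add_left cscale_real cscale_cscale norm_cscale scaleR_conv_of_real)

lemma subspace_real: "cv.subspace Y \<Longrightarrow> subspace (Y :: 'a::complex_banach set)"
  unfolding subspace_def cv.subspace_def by (simp add: cscale_real)

lemma closed_span_insert:
  fixes Y :: "'a::complex_banach set"
  assumes Y: "cv.subspace Y" "closed Y" and a: "a \<notin> Y"
  shows "closed {x. \<exists>k. x - cscale k a \<in> Y}"
proof -
  have Yne: "Y \<noteq> {}" using Y(1) cv.subspace_0 by blast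
  define d where "d = infdist a Y"
  have d: "d > 0" unfolding d_def by (rule infdist_pos_not_in_closed[OF Y(2) Yne a])
  have key: "cmod t * d \<le> norm z" if "z - cscale t a \<in> Y" for z t
  proof (cases "t = 0")
    case True then show ?thesis by simp
  next
    case False
    define y where "y = z - cscale t a"
    have "- cscale (1/t) y \<in> Y" using that Y(1) by (simp add: y_def cv.subspace_scale cv.subspace_neg)
    then have "d \<le> dist a (- cscale (1/t) y)" unfolding d_def by (rule infdist_le)
    also have "\<dots> = norm (a + cscale (1/t) y)" by (simp add: dist_norm)
    finally have "cmod t * d \<le> cmod t * norm (a + cscale (1/t) y)" by (simp add: mult_left_mono)
    also have "\<dots> = norm (cscale t (a + cscale (1/t) y))" by (simp add: norm_cscale)
    also have "cscale t (a + cscale (1/t) y) = z"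
      using False by (simp add: cscale_add_right cscale_cscale y_def)
    finally show ?thesis .
  qed
  show ?thesis
    unfolding closed_sequential_limits
  proof (intro allI impI, elim conjE)
    fix x l assume xs: "\<forall>n. x n \<in> {x. \<exists>k. x - cscale k a \<in> Y}" and lim: "x \<longlonglongrightarrow> l"
    then obtain k where k: "\<And>n. x n - cscale (k n) a \<in> Y" by simp metis
    have kd: "cmod (k n - k m) * d \<le> dist (x n) (x m)" for n m
    proof -
      have "(x n - x m) - cscale (k n - k m) a = (x n - cscale (k n) a) - (x m - cscale (k m) a)"
        by (simp add: cscale_diff_left algebra_simps)
      also have "\<dots> \<in> Y" using k Y(1) by (simp add: cv.subspace_diff)
      finally show ?thesis using key by (simp add: dist_norm)
    qed
    have "Cauchy k"
    proof (rule metric_CauchyI)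
      fix e :: real assume e: "e > 0"
      have "Cauchy x" using lim by (rule LIMSEQ_imp_Cauchy)
      then obtain M where M: "\<And>m n. m \<ge> M \<Longrightarrow> n \<ge> M \<Longrightarrow> dist (x m) (x n) < e * d"
        using e d by (meson metric_CauchyD mult_pos_pos)
      show "\<exists>M. \<forall>m\<ge>M. \<forall>n\<ge>M. dist (k m) (k n) < e"
      proof (intro exI allI impI)
        fix m n assume "m \<ge> M" "n \<ge> M"
        then have "cmod (k m - k n) * d < e * d" using kd[of m n] M[of m n] by linarith
        then show "dist (k m) (k n) < e" using d by (simp add: dist_norm)
      qed
    qed
    then obtain L where L: "k \<longlonglongrightarrow> L" using Cauchy_convergent_iff convergent_def by blast
    have "(\<lambda>n. cscale (k n) a) \<longlonglongrightarrow> cscale L a"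
      using bounded_linear.tendsto[OF bl_cscale_left L] .
    then have "(\<lambda>n. x n - cscale (k n) a) \<longlonglongrightarrow> l - cscale L a"
      using lim by (intro tendsto_diff)
    then have "l - cscale L a \<in> Y"
      using closed_sequentially[OF Y(2), of "\<lambda>n. x n - cscale (k n) a"] k by blast
    then show "l \<in> {x. \<exists>k. x - cscale k a \<in> Y}" by blast
  qed
qed

lemma closed_cspan:
  fixes S :: "'a::complex_banach set"
  assumes "finite S"
  shows "closed (cv.span S)"
  using assms
proof (induction S rule: finite_induct)
  case empty
  then show ?case by (simp add: cv.span_empty)
next
  case (insert a S)
  show ?case
  proof (cases "a \<in> cv.span S")
    case True
    then show ?thesis using insert by (simp add: cv.span_redundant)
  next
    case False
    then show ?thesis using closed_span_insert[OF cv.subspace_span insert(3) False]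
      by (simp add: cv.span_insert)
  qed
qed


lemma cscale_decomp: "cscale c x = Re c *\<^sub>R x + Im c *\<^sub>R cscale \<i> (x::'a::complex_banach)"
proof -
  have "cscale c x = cscale (complex_of_real (Re c) + complex_of_real (Im c) * \<i>) x"
    by (metis complex_eq mult.commute)
  also have "\<dots> = Re c *\<^sub>R x + Im c *\<^sub>R cscale \<i> x"
    by (simp only: cscale_add_left) (metis cscale_cscale cscale_of_real)
  finally show ?thesis .
qed

lemma cfun_sep:
  fixes M :: "'a::complex_banach set"
  assumes M: "cv.subspace M" "closed M" and x0: "x0 \<notin> M"
  shows "\<exists>\<phi>::'a \<Rightarrow> complex. bounded_linear \<phi> \<and> (\<forall>c x. \<phi> (cscale c x) = c * \<phi> x)
     \<and> (\<forall>y\<in>M. \<phi> y = 0) \<and> \<phi> x0 \<noteq> 0"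
proof -
  obtain u :: "'a \<Rightarrow> real" where u: "bounded_linear u" "\<forall>y\<in>M. u y = 0" "u x0 \<noteq> 0"
    using hb_sep[OF subspace_real[OF M(1)] M(2) x0] by blast
  interpret u: bounded_linear u by (rule u(1))
  have uc: "u (cscale c x) = Re c * u x + Im c * u (cscale \<i> x)" for c x
    by (subst cscale_decomp) (simp add: u.add u.scale)
  define \<phi> where "\<phi> x = Complex (u x) (- u (cscale \<i> x))" for x
  have hom: "\<phi> (cscale c x) = c * \<phi> x" for c x
  proof -
    have e: "u (cscale (\<i> * c) x) = - Im c * u x + Re c * u (cscale \<i> x)" using uc[of "\<i> * c" x] by simp
    show ?thesis unfolding \<phi>_def by (rule complex_eqI) (simp_all add: uc[of c x] e algebra_simps)
  qed
  obtain K where K: "\<And>x. norm (u x) \<le> norm x * K" using u.bounded by blast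
  have "bounded_linear \<phi>"
  proof (rule bounded_linear_intro[where K="2*K"])
    show "\<phi> (x + y) = \<phi> x + \<phi> y" for x y
      unfolding \<phi>_def by (simp add: u.add cscale_add_right complex_eq_iff)
    show "\<phi> (r *\<^sub>R x) = r *\<^sub>R \<phi> x" for r x
      unfolding \<phi>_def by (simp add: u.scale cscale_scaleR_comm complex_eq_iff)
    show "norm (\<phi> x) \<le> norm x * (2 * K)" for x
    proof -
      have "norm (\<phi> x) \<le> \<bar>u x\<bar> + \<bar>u (cscale \<i> x)\<bar>"
        using cmod_le[of "\<phi> x"] by (simp add: \<phi>_def)
      also have "\<dots> \<le> norm x * K + norm (cscale \<i> x) * K" using K[of x] K[of "cscale \<i> x"] by simp
      also have "\<dots> = norm x * (2 * K)" by (simp add: norm_cscale)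
      finally show ?thesis .
    qed
  qed
  moreover have "\<forall>y\<in>M. \<phi> y = 0"
    using u(2) M(1) by (simp add: \<phi>_def cv.subspace_scale complex_eq_iff)
  moreover have "\<phi> x0 \<noteq> 0" using u(3) by (simp add: \<phi>_def complex_eq_iff)
  ultimately show ?thesis using hom by blast
qed

lemma dual_funcs:
  fixes e :: "nat \<Rightarrow> 'a::complex_banach"
  assumes inj: "inj_on e {..<k}" and ind: "cv.independent (e ` {..<k})"
  shows "\<exists>\<psi>::nat \<Rightarrow> 'a \<Rightarrow> complex. \<forall>j<k. bounded_linear (\<psi> j) \<and> (\<forall>c x. \<psi> j (cscale c x) = c * \<psi> j x)
     \<and> (\<forall>i<k. \<psi> j (e i) = (if i = j then 1 else 0))"
proof -
  have "\<exists>\<psi>::'a \<Rightarrow> complex. bounded_linear \<psi> \<and> (\<forall>c x. \<psi> (cscale c x) = c * \<psi> x)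
     \<and> (\<forall>i<k. \<psi> (e i) = (if i = j then 1 else 0))" if j: "j < k" for j
  proof -
    define M where "M = cv.span (e ` ({..<k} - {j}))"
    have Mc: "closed M" unfolding M_def by (rule closed_cspan) simp
    have Ms: "cv.subspace M" unfolding M_def by simp
    have eq: "e ` ({..<k} - {j}) = e ` {..<k} - {e j}" using inj j by (auto simp: inj_on_def)
    have ej: "e j \<notin> M"
      using ind j unfolding M_def eq cv.dependent_def by auto
    obtain \<phi> :: "'a \<Rightarrow> complex" where \<phi>: "bounded_linear \<phi>" "\<forall>c x. \<phi> (cscale c x) = c * \<phi> x"
      "\<forall>y\<in>M. \<phi> y = 0" "\<phi> (e j) \<noteq> 0"
      using cfun_sep[OF Ms Mc ej] by blast
    define \<psi> where "\<psi> x = \<phi> x / \<phi> (e j)" for x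
    have "bounded_linear \<psi>"
      unfolding \<psi>_def by (rule bounded_linear_compose[OF bounded_linear_divide \<phi>(1)])
    moreover have "\<forall>c x. \<psi> (cscale c x) = c * \<psi> x" using \<phi>(2) by (simp add: \<psi>_def)
    moreover have "\<forall>i<k. \<psi> (e i) = (if i = j then 1 else 0)"
    proof (intro allI impI)
      fix i assume i: "i < k"
      show "\<psi> (e i) = (if i = j then 1 else 0)"
      proof (cases "i = j")
        case True then show ?thesis using \<phi>(4) by (simp add: \<psi>_def)
      next
        case False
        then have "e i \<in> M" unfolding M_def using i by (intro cv.span_base) auto
        then show ?thesis using \<phi>(3) False by (simp add: \<psi>_def)
      qed
    qed
    ultimately show ?thesis by blast
  qed
  then show ?thesis by metis
qed



lemma approx_to_exact:
  fixes S :: "'a::banach \<Rightarrow> 'b::real_normed_vector"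
  assumes bl: "bounded_linear S" and M: "M \<ge> 0"
    and ap: "\<And>y \<eta>. \<eta> > 0 \<Longrightarrow> \<exists>x. norm x \<le> M * norm y \<and> norm (y - S x) < \<eta>"
  shows "\<exists>x. S x = y \<and> norm x \<le> 2 * M * norm y"
proof (cases "y = 0")
  case True
  then show ?thesis using linear_simps(3)[OF bl] by (intro exI[of _ 0]) simp
next
  case False
  interpret S: bounded_linear S by (rule bl)
  define c where "c = norm y"
  have c: "c > 0" using False by (simp add: c_def)
  have "\<forall>v \<eta>. \<exists>x. \<eta> > 0 \<longrightarrow> norm x \<le> M * norm v \<and> norm (v - S x) < \<eta>" using ap by blast
  then obtain pick where pick: "\<And>v \<eta>. \<eta> > 0 \<Longrightarrow> norm (pick v \<eta>) \<le> M * norm v \<and> norm (v - S (pick v \<eta>)) < \<eta>"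
    by metis
  define ys where "ys = rec_nat y (\<lambda>n v. v - S (pick v (c / 2^Suc n)))"
  define xs where "xs n = pick (ys n) (c / 2^Suc n)" for n
  have ys0: "ys 0 = y" by (simp add: ys_def)
  have ysS: "ys (Suc n) = ys n - S (xs n)" for n by (simp add: ys_def xs_def)
  have ysb: "norm (ys n) \<le> c / 2^n" for n
  proof (induction n)
    case 0 then show ?case by (simp add: ys0 c_def)
  next
    case (Suc n)
    have "norm (ys n - S (xs n)) < c / 2^Suc n" unfolding xs_def using pick c by simp
    then show ?case by (simp add: ysS)
  qed
  have xsb: "norm (xs n) \<le> M * c * (1/2)^n" for n
  proof -
    have "norm (xs n) \<le> M * norm (ys n)" unfolding xs_def using pick c by simp
    also have "\<dots> \<le> M * (c / 2^n)" using ysb[of n] M by (rule mult_left_mono)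
    also have "M * (c / 2^n) = M * c * (1/2)^n" by (simp add: power_one_over)
    finally show ?thesis .
  qed
  have sg: "summable (\<lambda>n. M * c * (1/2::real)^n)" by (intro summable_mult summable_geometric) simp
  have sn: "summable (\<lambda>n. norm (xs n))"
    by (rule summable_comparison_test'[OF sg]) (use xsb in simp)
  have sx: "summable xs" by (rule summable_norm_cancel[OF sn])
  define X where "X = suminf xs"
  have nX: "norm X \<le> 2 * M * c"
  proof -
    have "norm X \<le> (\<Sum>n. norm (xs n))" unfolding X_def by (rule summable_norm[OF sn])
    also have "\<dots> \<le> (\<Sum>n. M * c * (1/2::real)^n)" by (rule suminf_le[OF xsb sn sg])
    also have "\<dots> = M * c * 2" using suminf_geometric[of "1/2::real"] by (simp add: suminf_mult)
    finally show ?thesis by simp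
  qed
  have "(\<lambda>n. S (xs n)) sums S X" unfolding X_def using S.sums[OF summable_sums[OF sx]] .
  moreover have "(\<lambda>n. S (xs n)) sums y"
  proof -
    have g: "(\<lambda>n. c * (1/2::real)^n) \<longlonglongrightarrow> 0"
      by (intro tendsto_mult_right_zero LIMSEQ_power_zero) simp
    have "\<forall>n. norm (ys n) \<le> c * (1/2::real)^n" using ysb by (simp add: power_one_over)
    then have "ys \<longlonglongrightarrow> 0"
      by (intro Lim_null_comparison[OF _ g] always_eventually)
    from telescope_sums'[OF this] show ?thesis by (simp add: ysS ys0)
  qed
  ultimately have "S X = y" by (rule sums_unique2)
  then show ?thesis using nX by (auto simp: c_def)
qed


lemma baire_ball:
  fixes S :: "'a::real_normed_vector \<Rightarrow> 'b::banach"
  assumes sur: "surj S"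
  shows "\<exists>n::nat. \<exists>y0 \<epsilon>. \<epsilon> > 0 \<and> ball y0 \<epsilon> \<subseteq> closure (S ` ball 0 (real n))"
proof (rule ccontr)
  assume neg: "\<not> ?thesis"
  define T where "T n = closure (S ` ball 0 (real n))" for n
  have int: "interior (T n) = {}" for n
  proof (rule ccontr)
    assume "interior (T n) \<noteq> {}"
    then obtain y where "y \<in> interior (T n)" by blast
    then obtain e where "e > 0" "ball y e \<subseteq> T n" using mem_interior by blast
    then show False using neg by (auto simp: T_def)
  qed
  have "euclidean interior_of \<Union>(range T) = {}"
  proof (rule Baire_category_alt)
    show "completely_metrizable_space (euclidean :: 'b topology) \<or> locally_compact_space (euclidean :: 'b topology) \<and> regular_space (euclidean :: 'b topology)"
      using completely_metrizable_space_euclidean by blast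
    show "countable (range T)" by simp
    fix U assume "U \<in> range T"
    then obtain n where "U = T n" by blast
    then show "closedin euclidean U \<and> euclidean interior_of U = {}"
      using int[of n] by (simp add: T_def closed_closedin[symmetric])
  qed
  moreover have "\<Union>(range T) = UNIV"
  proof -
    have "y \<in> \<Union>(range T)" for y
    proof -
      obtain x where x: "y = S x" using sur by (metis surjD)
      obtain n :: nat where "norm x < real n" using reals_Archimedean2 by blast
      then have "y \<in> T n" unfolding T_def using x closure_subset by fastforce
      then show ?thesis by blast
    qed
    then show ?thesis by blast
  qed
  ultimately show False by simp
qed

lemma bounded_inverse:
  fixes S :: "'a::banach \<Rightarrow> 'b::banach"
  assumes bl: "bounded_linear S" and bS: "bij S"
  shows "\<exists>\<gamma>>0. \<forall>x. \<gamma> * norm x \<le> norm (S x)"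
proof -
  interpret S: bounded_linear S by (rule bl)
  obtain n :: nat and y0 \<epsilon> where e: "\<epsilon> > 0" and B: "ball y0 \<epsilon> \<subseteq> closure (S ` ball 0 (real n))"
    using baire_ball[OF bij_is_surj[OF bS]] by blast
  define M where "M = 4 * real n / \<epsilon>"
  have M: "M \<ge> 0" using e by (simp add: M_def)
  have ap: "\<exists>x. norm x \<le> M * norm y \<and> norm (y - S x) < \<eta>" if \<eta>: "\<eta> > 0" for y \<eta>
  proof (cases "y = 0")
    case True then show ?thesis using \<eta> by (intro exI[of _ 0]) (simp add: S.zero)
  next
    case False
    define s where "s = \<epsilon> / (2 * norm y)"
    have s: "s > 0" using False e by (simp add: s_def)
    define z where "z = s *\<^sub>R y"
    have nz: "norm z < \<epsilon>" using False e s by (simp add: z_def s_def)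
    define e' where "e' = \<eta> * s"
    have e': "e' > 0" using \<eta> s by (simp add: e'_def)
    have "y0 + z \<in> closure (S ` ball 0 (real n))" using B nz by (auto simp: dist_norm)
    then have "\<exists>u\<in>S ` ball 0 (real n). dist u (y0 + z) < e' / 2"
      using e' unfolding closure_approachable by (meson half_gt_zero)
    then obtain a where a: "norm a < real n" "dist (S a) (y0 + z) < e' / 2" by auto
    have "y0 \<in> closure (S ` ball 0 (real n))" using B e by auto
    then have "\<exists>u\<in>S ` ball 0 (real n). dist u y0 < e' / 2"
      using e' unfolding closure_approachable by (meson half_gt_zero)
    then obtain b where b: "norm b < real n" "dist (S b) y0 < e' / 2" by auto
    define w where "w = a - b"
    have nw: "norm w \<le> 2 * real n"
      using a b norm_triangle_ineq4[of a b] by (simp add: w_def)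
    have zw: "norm (z - S w) < e'"
    proof -
      have "z - S w = (y0 + z - S a) - (y0 - S b)" by (simp add: w_def S.diff algebra_simps)
      then have "norm (z - S w) \<le> norm (y0 + z - S a) + norm (y0 - S b)"
        by (metis norm_triangle_ineq4)
      also have "\<dots> < e'" using a(2) b(2) by (simp add: dist_norm norm_minus_commute)
      finally show ?thesis .
    qed
    define x where "x = (1/s) *\<^sub>R w"
    have "norm x = norm w / s" using s by (simp add: x_def divide_inverse mult.commute)
    also have "\<dots> \<le> 2 * real n / s" using nw s by (simp add: divide_right_mono)
    also have "\<dots> = M * norm y" using False e by (simp add: s_def M_def field_simps)
    finally have nx: "norm x \<le> M * norm y" .
    have "y - S x = (1/s) *\<^sub>R (z - S w)" using s by (simp add: x_def z_def S.scaleR algebra_simps)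
    then have "norm (y - S x) = norm (z - S w) / s" using s by (simp add: divide_inverse mult.commute)
    also have "\<dots> < e' / s" using zw s by (simp add: divide_strict_right_mono)
    also have "\<dots> = \<eta>" using s by (simp add: e'_def)
    finally show ?thesis using nx by blast
  qed
  define \<gamma> where "\<gamma> = 1 / (2 * M + 1)"
  have g: "\<gamma> > 0" using M by (simp add: \<gamma>_def)
  have "\<gamma> * norm x \<le> norm (S x)" for x
  proof -
    obtain x' where x': "S x' = S x" "norm x' \<le> 2 * M * norm (S x)"
      using approx_to_exact[OF bl M ap] by blast
    have "x' = x" using x'(1) bS by (simp add: bij_def inj_eq)
    moreover have "2 * M * norm (S x) \<le> (2 * M + 1) * norm (S x)"
      by (intro mult_right_mono) auto
    ultimately have "norm x \<le> (2 * M + 1) * norm (S x)" using x'(2) by simp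
    then show ?thesis using M by (simp add: \<gamma>_def field_simps)
  qed
  then show ?thesis using g by blast
qed



lemma perturb_bij:
  fixes S E :: "'a::banach \<Rightarrow> 'a"
  assumes blS: "bounded_linear S" and blE: "bounded_linear E" and bS: "bij S"
    and g: "\<gamma> > 0" and low: "\<And>x. \<gamma> * norm x \<le> norm (S x)"
    and q: "0 \<le> q" "q < \<gamma>" and Eb: "\<And>x. norm (E x) \<le> q * norm x"
  shows "bij (\<lambda>x. S x + E x)"
proof -
  interpret S: bounded_linear S by (rule blS)
  interpret E: bounded_linear E by (rule blE)
  have zero: "z = 0" if "S z + E z = 0" for z
  proof (rule ccontr)
    assume nz: "z \<noteq> 0"
    have "S z = - E z" using that by (simp add: eq_neg_iff_add_eq_0)
    then have "\<gamma> * norm z \<le> q * norm z" using low[of z] Eb[of z] by simp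
    then show False using nz q by simp
  qed
  have inj: "inj (\<lambda>x. S x + E x)"
  proof (rule injI)
    fix x y assume "S x + E x = S y + E y"
    then have "S (x - y) + E (x - y) = 0" by (simp add: S.diff E.diff algebra_simps)
    then have "x - y = 0" by (rule zero)
    then show "x = y" by simp
  qed
  define Si where "Si = inv S"
  have SSi: "S (Si y) = y" for y unfolding Si_def using bS by (meson bij_inv_eq_iff)
  have SiS: "Si (S x) = x" for x unfolding Si_def using bS by (simp add: bij_is_inj)
  have Sidiff: "Si a - Si b = Si (a - b)" for a b
    by (metis SSi SiS S.diff)
  have Sib: "\<gamma> * norm (Si z) \<le> norm z" for z using low[of "Si z"] by (simp add: SSi)
  have ex: "\<exists>x. S x + E x = y" for y
  proof -
    define \<Phi> where "\<Phi> x = Si (y - E x)" for x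
    have "\<exists>!x. \<Phi> x = x"
    proof (rule banach_fix_type)
      show "0 \<le> q / \<gamma>" using q g by simp
      show "q / \<gamma> < 1" using q g by simp
      show "\<forall>x x'. dist (\<Phi> x) (\<Phi> x') \<le> q / \<gamma> * dist x x'"
      proof (intro allI)
        fix x x'
        have "dist (\<Phi> x) (\<Phi> x') = norm (Si (E x' - E x))"
          by (simp add: \<Phi>_def dist_norm Sidiff algebra_simps)
        also have "\<dots> \<le> norm (E x' - E x) / \<gamma>" using Sib[of "E x' - E x"] g by (simp add: field_simps)
        also have "norm (E x' - E x) = norm (E (x - x'))" by (simp add: E.diff norm_minus_commute)
        also have "norm (E (x - x')) / \<gamma> \<le> q * norm (x - x') / \<gamma>"
          using Eb[of "x - x'"] g by (simp add: divide_right_mono)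
        finally show "dist (\<Phi> x) (\<Phi> x') \<le> q / \<gamma> * dist x x'" by (simp add: dist_norm)
      qed
    qed
    then obtain x where "\<Phi> x = x" by blast
    then have "S x = y - E x" unfolding \<Phi>_def by (metis SSi)
    then show ?thesis by (intro exI[of _ x]) simp
  qed
  have surj: "surj (\<lambda>x. S x + E x)" unfolding surj_def using ex by metis
  show ?thesis using inj surj by (simp add: bij_def)
qed

lemma span_enum:
  fixes e :: "nat \<Rightarrow> 'a::complex_banach"
  assumes inj: "inj_on e {..<k}"
  shows "cv.span (e ` {..<k}) = range (\<lambda>c. \<Sum>i<k. cscale (c i) (e i))"
proof -
  have sp: "cv.span (e ` {..<k}) = range (\<lambda>u. \<Sum>v\<in>e ` {..<k}. cscale (u v) v)"
    by (rule cv.span_finite) simp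
  have re: "(\<Sum>v\<in>e ` {..<k}. cscale (u v) v) = (\<Sum>i<k. cscale (u (e i)) (e i))" for u
    using sum.reindex[OF inj] by simp
  show ?thesis
  proof
    show "cv.span (e ` {..<k}) \<subseteq> range (\<lambda>c. \<Sum>i<k. cscale (c i) (e i))"
      unfolding sp re by auto
    show "range (\<lambda>c. \<Sum>i<k. cscale (c i) (e i)) \<subseteq> cv.span (e ` {..<k})"
    proof
      fix x assume "x \<in> range (\<lambda>c. \<Sum>i<k. cscale (c i) (e i))"
      then obtain c where x: "x = (\<Sum>i<k. cscale (c i) (e i))" by blast
      define u where "u v = c (inv_into {..<k} e v)" for v
      have "x = (\<Sum>i<k. cscale (u (e i)) (e i))"
        unfolding x u_def using inj by (intro sum.cong) (auto simp: inv_into_f_f)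
      then show "x \<in> cv.span (e ` {..<k})" unfolding sp re by blast
    qed
  qed
qed

lemma indep_enum:
  fixes f :: "nat \<Rightarrow> 'a::complex_banach"
  assumes inj: "inj_on f {..<k}" and ind: "cv.independent (f ` {..<k})"
    and z: "(\<Sum>j<k. cscale (c j) (f j)) = 0" and j: "j < k"
  shows "c j = 0"
proof -
  define u where "u v = c (inv_into {..<k} f v)" for v
  have "(\<Sum>v\<in>f ` {..<k}. cscale (u v) v) = (\<Sum>i<k. cscale (u (f i)) (f i))"
    using sum.reindex[OF inj] by simp
  also have "\<dots> = (\<Sum>i<k. cscale (c i) (f i))"
    unfolding u_def using inj by (intro sum.cong) (auto simp: inv_into_f_f)
  finally have "(\<Sum>v\<in>f ` {..<k}. cscale (u v) v) = 0" using z by simp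
  then have "\<forall>v\<in>f ` {..<k}. u v = 0"
    using ind unfolding cv.independent_explicit_finite_subsets by blast
  then have "u (f j) = 0" using j by blast
  then show ?thesis using inj j by (simp add: u_def inv_into_f_f)
qed

lemma cb_clin:
  assumes "is_cbounded T"
  shows "clin (blinfun_apply T)"
  unfolding Vector_Spaces.linear_iff
  using assms cv.vector_space_axioms by (auto simp: is_cbounded_def blinfun.add_right)



lemma complement_D:
  fixes R :: "'a::complex_banach set"
  assumes R: "cv.subspace R" and B0: "finite B0" "cspan (R \<union> B0) = UNIV"
  shows "\<exists>D. finite D \<and> cv.independent D \<and> (\<forall>x. x \<in> cv.span D \<longrightarrow> x \<in> R \<longrightarrow> x = 0)
     \<and> (\<forall>z. \<exists>r\<in>R. \<exists>s\<in>cv.span D. z = r + s) \<and> card D = ccodim R"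
proof -
  define V where "V = cv.span B0"
  have V: "cv.subspace V" "V \<subseteq> cv.span B0" by (simp_all add: V_def)
  have sm: "\<exists>r\<in>R. \<exists>v\<in>V. z = r + v" for z
  proof -
    have "z \<in> cv.span (R \<union> B0)" using B0(2) by (simp add: cspan_eq)
    then obtain r v where "r \<in> R" "v \<in> cv.span B0" "z = r + v"
      unfolding span_Un_subspace[OF R] by auto
    then show ?thesis unfolding V_def by blast
  qed
  obtain C where C: "C \<subseteq> R \<inter> V" "cv.independent C" "R \<inter> V \<subseteq> cv.span C" "card C = cv.dim (R \<inter> V)"
    by (rule cv.basis_exists)
  obtain B where B: "C \<subseteq> B" "B \<subseteq> V" "cv.independent B" "V \<subseteq> cv.span B"
    using cv.maximal_independent_subset_extend[of C V] C by blast
  have fB: "finite B" using findim_subset[OF B0(1) V(2) B(2,3)] .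
  define D where "D = B - C"
  have indD: "cv.independent D" using B(3) by (rule cv.independent_mono) (auto simp: D_def)
  have spBV: "cv.span B \<subseteq> V" using B(2) V by (intro cv.span_minimal) auto
  have int: "x = 0" if x: "x \<in> cv.span D" "x \<in> R" for x
  proof -
    have "x \<in> V" using x(1) spBV cv.span_mono[of D B] by (auto simp: D_def)
    then have "x \<in> cv.span C" using C x by auto
    moreover have "cv.independent (C \<union> D)" using B by (simp add: D_def Un_absorb1)
    ultimately show "x = 0" using span_disj[of C D x] x by (auto simp: D_def)
  qed
  have sm2: "\<exists>r\<in>R. \<exists>s\<in>cv.span D. z = r + s" for z
  proof -
    obtain r v where rv: "r \<in> R" "v \<in> V" "z = r + v" using sm by blast
    have "v \<in> cv.span (C \<union> D)" using B rv by (auto simp: D_def Un_absorb1)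
    then obtain a b where ab: "a \<in> cv.span C" "b \<in> cv.span D" "v = a + b"
      unfolding cv.span_Un by auto
    have "a \<in> R" using ab C(1) cv.span_minimal[OF _ R, of C] by auto
    then show ?thesis using rv ab cv.subspace_add[OF R] by (intro bexI[of _ "r + a"] bexI[of _ b]) auto
  qed
  have fD: "finite D" using fB by (simp add: D_def)
  note cc = ccodim_eq[OF R fD indD int sm2]
  have "\<forall>x. x \<in> cv.span D \<longrightarrow> x \<in> R \<longrightarrow> x = 0" using int by blast
  moreover have "\<forall>z. \<exists>r\<in>R. \<exists>s\<in>cv.span D. z = r + s" using sm2 by blast
  ultimately show ?thesis using fD indD cc(2) by (intro exI[of _ D]) simp
qed

lemma enum_finite:
  assumes "finite E"
  obtains e :: "nat \<Rightarrow> 'b" where "inj_on e {..<card E}" "e ` {..<card E} = E"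
proof -
  obtain h where "bij_betw h {0..<card E} E" using ex_bij_betw_nat_finite[OF assms] by blast
  then show ?thesis using that by (auto simp: bij_betw_def atLeast0LessThan)
qed

definition wop :: "('a::complex_banach \<Rightarrow>\<^sub>L 'a) \<Rightarrow> bool" where
  "wop B \<longleftrightarrow> fredholm (blinfun_apply B) \<and> findex (blinfun_apply B) = 0"


lemma open_weyl:
  fixes A :: "'a::complex_banach \<Rightarrow>\<^sub>L 'a"
  assumes cA: "is_cbounded A" and wA: "wop A"
  shows "\<exists>r>0. \<forall>B. is_cbounded B \<longrightarrow> norm (B - A) < r \<longrightarrow> wop B"
proof -
  let ?a = "blinfun_apply A"
  have la: "clin ?a" by (rule cb_clin[OF cA])
  have fA: "fredholm ?a" and iA: "findex ?a = 0" using wA by (simp_all add: wop_def)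
  define N where "N = kernel ?a"
  have Ns: "cv.subspace N" unfolding N_def kernel_def by (rule cvp.linear_subspace_kernel[OF la])
  obtain B0 where B0: "finite B0" "N \<subseteq> cv.span B0"
    using fA unfolding fredholm_def N_def cspan_eq by blast
  obtain E where E: "E \<subseteq> N" "cv.independent E" "N \<subseteq> cv.span E" "card E = cv.dim N"
    by (rule cv.basis_exists)
  have fE: "finite E" using findim_subset[OF B0 E(1,2)] .
  have cdN: "cdim N = cv.dim N" using cdim_eq[OF B0] .
  define R where "R = range ?a"
  have Rs: "cv.subspace R" unfolding R_def by (rule cvp.linear_subspace_image[OF la cv.subspace_UNIV])
  obtain C0 where C0: "finite C0" "cspan (R \<union> C0) = UNIV"
    using fA unfolding fredholm_def R_def by blast
  obtain D where D: "finite D" "cv.independent D" "\<forall>x. x \<in> cv.span D \<longrightarrow> x \<in> R \<longrightarrow> x = 0"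
     "\<forall>z. \<exists>r\<in>R. \<exists>s\<in>cv.span D. z = r + s" "card D = ccodim R"
    using complement_D[OF Rs C0] by blast
  define k where "k = card E"
  have cD: "card D = k" using iA cdN E(4) D(5) by (simp add: findex_def k_def N_def R_def)
  obtain e :: "nat \<Rightarrow> 'a" where e: "inj_on e {..<k}" "e ` {..<k} = E"
    using enum_finite[OF fE] unfolding k_def by blast
  obtain f :: "nat \<Rightarrow> 'a" where f: "inj_on f {..<k}" "f ` {..<k} = D"
    using enum_finite[OF D(1)] cD by metis
  have spE: "cv.span E = N"
    using E(1,3) cv.span_minimal[OF E(1) Ns] by blast
  have Nr: "N = range (\<lambda>c. \<Sum>i<k. cscale (c i) (e i))"
    using span_enum[OF e(1)] e(2) spE by simp
  have Dr: "cv.span D = range (\<lambda>c. \<Sum>i<k. cscale (c i) (f i))"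
    using span_enum[OF f(1)] f(2) by simp
  have indf: "cv.independent (f ` {..<k})" using f(2) D(2) by simp
  obtain \<psi> :: "nat \<Rightarrow> 'a \<Rightarrow> complex" where \<psi>: "\<And>j. j < k \<Longrightarrow> bounded_linear (\<psi> j)"
    "\<And>j c x. j < k \<Longrightarrow> \<psi> j (cscale c x) = c * \<psi> j x"
    "\<And>j i. j < k \<Longrightarrow> i < k \<Longrightarrow> \<psi> j (e i) = (if i = j then 1 else 0)"
    using dual_funcs[OF e(1)] e(2) E(2) by metis
  define K where "K x = (\<Sum>j<k. cscale (\<psi> j x) (f j))" for x
  have blK: "bounded_linear K"
    unfolding K_def
    by (intro bounded_linear_sum bounded_linear_compose[OF bl_cscale_left] \<psi>(1)) simp
  interpret K: bounded_linear K by (rule blK)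
  have Kc: "K (cscale c x) = cscale c (K x)" for c x
  proof -
    have "K (cscale c x) = (\<Sum>j<k. cscale c (cscale (\<psi> j x) (f j)))"
      unfolding K_def by (intro sum.cong) (simp_all add: \<psi>(2) cscale_cscale)
    also have "\<dots> = cscale c (K x)" unfolding K_def by (simp add: cv.scale_sum_right)
    finally show ?thesis .
  qed
  have clK: "clin K"
    unfolding Vector_Spaces.linear_iff using cv.vector_space_axioms K.add Kc by blast
  have KD: "K x \<in> cv.span D" for x
    unfolding K_def using f(2) by (intro cv.span_sum cv.span_scale cv.span_base) auto
  have psum: "\<psi> j (\<Sum>i<k. cscale (c i) (e i)) = c j" if j: "j < k" for j c
  proof -
    interpret P: bounded_linear "\<psi> j" by (rule \<psi>(1)[OF j])
    have "\<psi> j (\<Sum>i<k. cscale (c i) (e i)) = (\<Sum>i<k. \<psi> j (cscale (c i) (e i)))"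
      using sum_comp_morphism[of "\<psi> j" "\<lambda>i. cscale (c i) (e i)" "{..<k}"] P.zero P.add
      by (simp add: o_def)
    also have "\<dots> = (\<Sum>i<k. if i = j then c i else 0)"
      using j by (intro sum.cong) (simp_all add: \<psi>(2) \<psi>(3))
    also have "\<dots> = c j" using j by (simp add: sum.delta)
    finally show ?thesis .
  qed
  have Kval: "K (\<Sum>i<k. cscale (c i) (e i)) = (\<Sum>j<k. cscale (c j) (f j))" for c
    unfolding K_def by (intro sum.cong) (simp_all add: psum)
  define S where "S x = ?a x + K x" for x
  have blS: "bounded_linear S" unfolding S_def
    by (intro bounded_linear_add blK) (rule blinfun.bounded_linear_right)
  interpret S: bounded_linear S by (rule blS)
  have aN: "?a x = 0" if "x \<in> N" for x using that by (simp add: N_def kernel_def)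
  have Sz: "x = 0" if "S x = 0" for x
  proof -
    have "?a x = - K x" using that by (simp add: S_def eq_neg_iff_add_eq_0)
    moreover have "- K x \<in> cv.span D" using KD by (simp add: cv.span_neg)
    moreover have "?a x \<in> R" by (simp add: R_def)
    ultimately have ax: "?a x = 0" using D(3) by metis
    then have Kx: "K x = 0" using that by (simp add: S_def)
    have "x \<in> N" using ax by (simp add: N_def kernel_def)
    then obtain c where xc: "x = (\<Sum>i<k. cscale (c i) (e i))" using Nr by blast
    then have "(\<Sum>j<k. cscale (c j) (f j)) = 0" using Kx Kval by simp
    then have "\<forall>j<k. c j = 0" using indep_enum[OF f(1) indf] by blast
    then show "x = 0" using xc by simp
  qed
  have injS: "inj S"
  proof (rule injI)
    fix x y assume "S x = S y"
    then have "S (x - y) = 0" by (simp add: S.diff)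
    then have "x - y = 0" by (rule Sz)
    then show "x = y" by simp
  qed
  have exS: "\<exists>x. S x = y" for y
  proof -
    obtain r t where rt: "r \<in> R" "t \<in> cv.span D" "y = r + t" using D(4) by blast
    obtain x0 where x0: "r = ?a x0" using rt(1) by (auto simp: R_def)
    obtain c where tc: "t = (\<Sum>j<k. cscale (c j) (f j))" using rt(2) Dr by blast
    define n where "n = (\<Sum>i<k. cscale (c i - \<psi> i x0) (e i))"
    have nN: "n \<in> N" unfolding n_def Nr by (rule range_eqI[where x="\<lambda>i. c i - \<psi> i x0"]) simp
    have Kn: "K n = (\<Sum>j<k. cscale (c j - \<psi> j x0) (f j))" using Kval[of "\<lambda>i. c i - \<psi> i x0"] by (simp only: n_def)
    have "K x0 + K n = (\<Sum>j<k. cscale (\<psi> j x0) (f j) + cscale (c j - \<psi> j x0) (f j))"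
      by (subst Kn) (simp add: K_def sum.distrib)
    also have "\<dots> = t" unfolding tc by (intro sum.cong) (simp_all add: cscale_add_left[symmetric])
    finally have "K x0 + K n = t" .
    then have "S (x0 + n) = y"
      using aN[OF nN] x0 rt(3) by (simp add: S_def blinfun.add_right K.add algebra_simps)
    then show ?thesis by blast
  qed
  have bS: "bij S" using injS exS unfolding bij_def surj_def by metis
  obtain \<gamma> where g: "\<gamma> > 0" "\<And>x. \<gamma> * norm x \<le> norm (S x)"
    using bounded_inverse[OF blS bS] by blast
  have "wop B" if cB: "is_cbounded B" and nB: "norm (B - A) < \<gamma>" for B
  proof -
    define Ef where "Ef x = blinfun_apply B x - ?a x" for x
    have Efe: "Ef x = blinfun_apply (B - A) x" for x by (simp add: Ef_def blinfun.diff_left)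
    have blE: "bounded_linear Ef" unfolding Efe[abs_def] by (rule blinfun.bounded_linear_right)
    have Eb: "norm (Ef x) \<le> norm (B - A) * norm x" for x unfolding Efe by (rule norm_blinfun)
    have bG: "bij (\<lambda>x. S x + Ef x)"
      by (rule perturb_bij[OF blS blE bS g(1) g(2) norm_ge_zero nB Eb])
    have Geq: "(\<lambda>x. S x + Ef x) = (\<lambda>x. blinfun_apply B x + K x)"
    proof (rule ext)
      fix x
      have "S x + Ef x = ?a x + K x + (blinfun_apply B x - ?a x)" by (simp add: S_def Ef_def)
      also have "\<dots> = blinfun_apply B x + K x" by (simp add: algebra_simps)
      finally show "S x + Ef x = blinfun_apply B x + K x" .
    qed
    have cm: "(\<lambda>x. K x + blinfun_apply B x) = (\<lambda>x. blinfun_apply B x + K x)"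
      by (rule ext) (rule add.commute)
    have lG: "clin (\<lambda>x. blinfun_apply B x + K x)"
      using cvp.linear_compose_add[OF cb_clin[OF cB] clK] cm by simp
    have "fredholm (\<lambda>x. (blinfun_apply B x + K x) - K x) \<and> findex (\<lambda>x. (blinfun_apply B x + K x) - K x) = 0"
      by (rule index_zero_bij_minus_fin[OF lG _ clK D(1) KD]) (use bG Geq in simp)
    then show ?thesis by (simp add: wop_def)
  qed
  then show ?thesis using g(1) by blast
qed



definition cs_op :: "complex \<Rightarrow> ('a::complex_banach \<Rightarrow>\<^sub>L 'a)" where
  "cs_op z = Blinfun (cscale z)"

lemma cs_op_apply: "blinfun_apply (cs_op z) = cscale z"
  unfolding cs_op_def by (rule bounded_linear_Blinfun_apply[OF bl_cscale_right])

lemma cs_op_cb: "is_cbounded (cs_op z :: 'a::complex_banach \<Rightarrow>\<^sub>L 'a)"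
  unfolding is_cbounded_def cs_op_apply by (simp add: cscale_cscale mult.commute)

lemma cb_diff: "is_cbounded A \<Longrightarrow> is_cbounded B \<Longrightarrow> is_cbounded (A - B)"
  unfolding is_cbounded_def by (simp add: blinfun.diff_left cscale_diff_right)

lemma norm_cs_op: "norm (cs_op z :: 'a::complex_banach \<Rightarrow>\<^sub>L 'a) \<le> cmod z"
  by (rule norm_blinfun_bound) (simp_all add: cs_op_apply norm_cscale)

lemma cs_op_diff: "cs_op a - cs_op b = (cs_op (a - b) :: 'a::complex_banach \<Rightarrow>\<^sub>L 'a)"
  by (rule blinfun_eqI) (simp add: blinfun.diff_left cs_op_apply cscale_diff_left)

lemma weyl_spectrum_iff:
  fixes T :: "'x \<Rightarrow> ('a::complex_banach \<Rightarrow>\<^sub>L 'a)"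
  shows "z \<in> weyl_spectrum T \<longleftrightarrow> \<not> (\<forall>x. wop (T x - cs_op z))"
proof -
  have "blinfun_apply (T x - cs_op z) = (\<lambda>v. blinfun_apply (T x) v - cscale z v)" for x
    by (rule ext) (simp add: blinfun.diff_left cs_op_apply)
  then show ?thesis by (simp add: weyl_spectrum_def weyl_family_def wop_def)
qed

lemma unif_weyl:
  fixes Ks :: "('a::complex_banach \<Rightarrow>\<^sub>L 'a) set"
  assumes cK: "compact Ks" and wK: "\<And>A. A \<in> Ks \<Longrightarrow> is_cbounded A \<and> wop A"
  shows "\<exists>\<epsilon>>0. \<forall>A\<in>Ks. \<forall>B. is_cbounded B \<longrightarrow> norm (B - A) < \<epsilon> \<longrightarrow> wop B"
proof -
  have "\<forall>A\<in>Ks. \<exists>r>0. \<forall>B. is_cbounded B \<longrightarrow> norm (B - A) < r \<longrightarrow> wop B"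
    using wK open_weyl by blast
  then obtain r where r: "\<And>A. A \<in> Ks \<Longrightarrow> r A > 0"
    "\<And>A B. A \<in> Ks \<Longrightarrow> is_cbounded B \<Longrightarrow> norm (B - A) < r A \<Longrightarrow> wop B"
    by metis
  have cov: "Ks \<subseteq> \<Union>((\<lambda>A. ball A (r A)) ` Ks)" using r(1) by force
  obtain \<epsilon> where e: "\<epsilon> > 0" and eb: "\<And>x. x \<in> Ks \<Longrightarrow> \<exists>G \<in> (\<lambda>A. ball A (r A)) ` Ks. ball x \<epsilon> \<subseteq> G"
    using Heine_Borel_lemma[OF cK cov] by blast
  have "wop B" if A: "A \<in> Ks" and cB: "is_cbounded B" and nB: "norm (B - A) < \<epsilon>" for A B
  proof -
    obtain A' where A': "A' \<in> Ks" "ball A \<epsilon> \<subseteq> ball A' (r A')" using eb[OF A] by blast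
    have "B \<in> ball A \<epsilon>" using nB by (simp add: dist_norm norm_minus_commute)
    then have "B \<in> ball A' (r A')" using A' by blast
    then have "norm (B - A') < r A'" by (simp add: dist_norm norm_minus_commute)
    then show ?thesis using r(2)[OF A'(1) cB] by blast
  qed
  then show ?thesis using e by blast
qed

lemma avoid_ball:
  fixes T :: "'x::topological_space \<Rightarrow> ('a::complex_banach \<Rightarrow>\<^sub>L 'a)"
  assumes cX: "compact (UNIV :: 'x set)" and cT: "continuous_on UNIV T" and cbT: "\<forall>x. is_cbounded (T x)"
    and z: "z \<notin> weyl_spectrum T"
  shows "\<exists>\<epsilon>>0. \<forall>x B. is_cbounded B \<longrightarrow> norm (B - (T x - cs_op z)) < \<epsilon> \<longrightarrow> wop B"
proof -
  define Ks where "Ks = (\<lambda>x. T x - cs_op z) ` UNIV"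
  have cK: "compact Ks" unfolding Ks_def
    by (intro compact_continuous_image[OF _ cX] continuous_intros cT)
  have "is_cbounded A \<and> wop A" if "A \<in> Ks" for A
    using that z cbT cs_op_cb unfolding Ks_def weyl_spectrum_iff by (auto intro: cb_diff)
  then obtain \<epsilon> where "\<epsilon> > 0" "\<forall>A\<in>Ks. \<forall>B. is_cbounded B \<longrightarrow> norm (B - A) < \<epsilon> \<longrightarrow> wop B"
    using unif_weyl[OF cK] by blast
  then show ?thesis unfolding Ks_def by blast
qed


theorem mainTheorem10:
  fixes T :: "'x::topological_space \<Rightarrow> ('a::complex_banach \<Rightarrow>\<^sub>L 'a)"
  assumes "infinite_dimensional TYPE('a)"
    and "compact (UNIV :: 'x set)"
    and "countable (components (UNIV :: 'x set))"
    and "continuous_on UNIV T"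
    and "\<forall>x. is_cbounded (T x)"
  shows "closed (weyl_spectrum T)
    \<and> (\<forall>Ts :: nat \<Rightarrow> 'x \<Rightarrow> ('a \<Rightarrow>\<^sub>L 'a).
          (\<forall>n. continuous_on UNIV (Ts n) \<and> (\<forall>x. is_cbounded (Ts n x)))
          \<and> uniform_limit UNIV Ts T sequentially
          \<longrightarrow> kuratowski_limsup (\<lambda>n. weyl_spectrum (Ts n)) \<subseteq> weyl_spectrum T)"
proof
  note cX = assms(2) and cT = assms(4) and cbT = assms(5)
  have "open (- weyl_spectrum T)"
    unfolding open_contains_ball
  proof
    fix z assume "z \<in> - weyl_spectrum T"
    then obtain \<epsilon> where e: "\<epsilon> > 0"
      and eb: "\<And>x B. is_cbounded B \<Longrightarrow> norm (B - (T x - cs_op z)) < \<epsilon> \<Longrightarrow> wop B"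
      using avoid_ball[OF cX cT cbT] by blast
    have "\<mu> \<notin> weyl_spectrum T" if "\<mu> \<in> ball z \<epsilon>" for \<mu>
    proof -
      have "wop (T x - cs_op \<mu>)" for x
      proof (rule eb)
        show "is_cbounded (T x - cs_op \<mu>)" using cbT cs_op_cb by (blast intro: cb_diff)
        have "T x - cs_op \<mu> - (T x - cs_op z) = cs_op z - cs_op \<mu>" by simp
        also have "\<dots> = cs_op (z - \<mu>)" by (rule cs_op_diff)
        finally have "norm (T x - cs_op \<mu> - (T x - cs_op z)) \<le> cmod (z - \<mu>)"
          using norm_cs_op by metis
        also have "\<dots> < \<epsilon>" using that by (simp add: dist_norm)
        finally show "norm (T x - cs_op \<mu> - (T x - cs_op z)) < \<epsilon>" .
      qed
      then show ?thesis unfolding weyl_spectrum_iff by blast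
    qed
    then show "\<exists>\<epsilon>>0. ball z \<epsilon> \<subseteq> - weyl_spectrum T" using e by blast
  qed
  then show "closed (weyl_spectrum T)" by (simp add: closed_def)
next
  note cX = assms(2) and cT = assms(4) and cbT = assms(5)
  show "\<forall>Ts :: nat \<Rightarrow> 'x \<Rightarrow> ('a \<Rightarrow>\<^sub>L 'a).
          (\<forall>n. continuous_on UNIV (Ts n) \<and> (\<forall>x. is_cbounded (Ts n x)))
          \<and> uniform_limit UNIV Ts T sequentially
          \<longrightarrow> kuratowski_limsup (\<lambda>n. weyl_spectrum (Ts n)) \<subseteq> weyl_spectrum T"
  proof (intro allI impI subsetI)
    fix Ts :: "nat \<Rightarrow> 'x \<Rightarrow> ('a \<Rightarrow>\<^sub>L 'a)" and z
    assume H: "(\<forall>n. continuous_on UNIV (Ts n) \<and> (\<forall>x. is_cbounded (Ts n x)))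
          \<and> uniform_limit UNIV Ts T sequentially"
      and zl: "z \<in> kuratowski_limsup (\<lambda>n. weyl_spectrum (Ts n))"
    have cbTs: "\<And>n x. is_cbounded (Ts n x)" and ul: "uniform_limit UNIV Ts T sequentially"
      using H by auto
    show "z \<in> weyl_spectrum T"
    proof (rule ccontr)
      assume "z \<notin> weyl_spectrum T"
      then obtain \<epsilon> where e: "\<epsilon> > 0"
        and eb: "\<And>x B. is_cbounded B \<Longrightarrow> norm (B - (T x - cs_op z)) < \<epsilon> \<Longrightarrow> wop B"
        using avoid_ball[OF cX cT cbT] by blast
      have "\<forall>\<^sub>F n in sequentially. \<forall>x\<in>UNIV. dist (Ts n x) (T x) < \<epsilon> / 2"
        using uniform_limitD[OF ul, of "\<epsilon> / 2"] e by linarith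
      then obtain N where N: "\<And>n x. n \<ge> N \<Longrightarrow> dist (Ts n x) (T x) < \<epsilon> / 2"
        unfolding eventually_sequentially by blast
      have disj: "weyl_spectrum (Ts n) \<inter> ball z (\<epsilon> / 2) = {}" if n: "n \<ge> N" for n
      proof -
        have "\<mu> \<notin> weyl_spectrum (Ts n)" if \<mu>: "\<mu> \<in> ball z (\<epsilon> / 2)" for \<mu>
        proof -
          have "wop (Ts n x - cs_op \<mu>)" for x
          proof (rule eb)
            show "is_cbounded (Ts n x - cs_op \<mu>)" using cbTs cs_op_cb by (blast intro: cb_diff)
            have "Ts n x - cs_op \<mu> - (T x - cs_op z) = (Ts n x - T x) + (cs_op z - cs_op \<mu>)"
              by (simp add: algebra_simps)
            then have "norm (Ts n x - cs_op \<mu> - (T x - cs_op z)) \<le> norm (Ts n x - T x) + norm (cs_op z - cs_op \<mu> :: 'a \<Rightarrow>\<^sub>L 'a)"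
              by (metis norm_triangle_ineq)
            also have "norm (cs_op z - cs_op \<mu> :: 'a \<Rightarrow>\<^sub>L 'a) \<le> cmod (z - \<mu>)"
              using norm_cs_op cs_op_diff by metis
            also have "norm (Ts n x - T x) < \<epsilon> / 2" using N[OF n, of x] by (simp add: dist_norm)
            also have "cmod (z - \<mu>) < \<epsilon> / 2" using \<mu> by (simp add: dist_norm)
            finally show "norm (Ts n x - cs_op \<mu> - (T x - cs_op z)) < \<epsilon>" by simp
          qed
          then show ?thesis unfolding weyl_spectrum_iff by blast
        qed
        then show ?thesis by blast
      qed
      have "infinite {n. weyl_spectrum (Ts n) \<inter> ball z (\<epsilon> / 2) \<noteq> {}}"
        using zl e unfolding kuratowski_limsup_def by simp
      moreover have "{n. weyl_spectrum (Ts n) \<inter> ball z (\<epsilon> / 2) \<noteq> {}} \<subseteq> {..<N}"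
        using disj by (auto simp: not_less[symmetric])
      ultimately show False using finite_subset by blast
    qed
  qed
qed

end
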